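(* Let $\mathcal{X}$ be a measurable space, $\mathcal{Y}$ a finite set, and $W:\mathcal{X}\to\mathcal{Y}$ a channel. Then for any $\lambda_1,\lambda_2>0$ with $\lambda_1+\lambda_2<1$, \[ \frac14\,\overline{d}_M\!\left(\sqrt{\widetilde{\mathcal{X}}}\right)\;\le\;\dot{C}^{\mathrm{opt}}_{\mathrm{DI}}(W)\;\le\;\limsup_{n\to\infty}\frac{1}{n\log n}\log N_{\mathrm{DI}}(n,\lambda_1,\lambda_2)\;\le\;\frac12\,\overline{d}_M\!\left(\sqrt{\widetilde{\mathcal{X}}}\right). \]
   Context: A channel $W:\mathcal{X}\to\mathcal{Y}$ is a measurable map $x\mapsto W_x\in\mathcal{P}(\mathcal{Y})$, where $\mathcal{P}(\mathcal{Y})$ is the set of probability distributions on $\mathcal{Y}$ (viewed as vectors in $\mathbb{R}^{\mathcal{Y}}$). For $x^n=x_1\dots x_n\in\mathcal{X}^n$, $W_{x^n}(y^n)=\prod_{i=1}^n W_{x_i}(y_i)$. An $(n,N,\lambda_1,\lambda_2)$-deterministic identification (DI) code is a family $\{(u_j,\mathcal{E}_j):j\in[N]\}$ with $u_j\in\mathcal{X}^n$, $\mathcal{E}_j\subset\mathcal{Y}^n$, such that $W_{u_j}(\mathcal{E}_j)\ge 1-\lambda_1$ for all $j$ and $W_{u_j}(\mathcal{E}_k)\le\lambda_2$ for all $j\ne k$. $N_{\mathrm{DI}}(n,\lambda_1,\lambda_2)$ is the largest such $N$. Logarithms are base 2. The optimistic DI capacity is $\dot{C}^{\mathrm{opt}}_{\mathrm{DI}}(W)=\inf_{\lambda_1,\lambda_2>0}\limsup_{n\to\infty}\frac{1}{n\log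 n}\log N_{\mathrm{DI}}(n,\lambda_1,\lambda_2)$. Let $\sqrt{\widetilde{\mathcal{X}}}=\{(\sqrt{W_x(y)})_{y\in\mathcal{Y}}:x\in\mathcal{X}\}\subset\mathbb{R}^{\mathcal{Y}}$ with the Euclidean metric. For a nonempty bounded set $F$ in a Euclidean space, $\Gamma_\delta(F)$ is the minimum number of closed balls of radius $\delta$ centered at points of $F$ whose union contains $F$, and the upper Minkowski dimension is $\overline{d}_M(F)=\limsup_{\delta\to0}\frac{\log\Gamma_\delta(F)}{-\log\delta}$. *)

theory Defs
  imports "HOL-Analysis.Analysis" "HOL-Library.Extended_Nat"
begin

definition channel :: "'a measure \<Rightarrow> ('a \<Rightarrow> 'b::finite \<Rightarrow> real) \<Rightarrow> bool" where
  "channel M W \<longleftrightarrow>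
     (\<forall>x\<in>space M. (\<forall>y. 0 \<le> W x y) \<and> (\<Sum>y\<in>UNIV. W x y) = 1) \<and>
     (\<forall>y. (\<lambda>x. W x y) \<in> borel_measurable M)"

definition Wseq :: "('a \<Rightarrow> 'b \<Rightarrow> real) \<Rightarrow> 'a list \<Rightarrow> 'b list \<Rightarrow> real" where
  "Wseq W xs ys = (\<Prod>i<length xs. W (xs ! i) (ys ! i))"

definition Wset :: "('a \<Rightarrow> 'b \<Rightarrow> real) \<Rightarrow> 'a list \<Rightarrow> 'b list set \<Rightarrow> real" where
  "Wset W xs E = (\<Sum>ys\<in>E. Wseq W xs ys)"

definition DI_code :: "'a measure \<Rightarrow> ('a \<Rightarrow> 'b::finite \<Rightarrow> real) \<Rightarrow> nat \<Rightarrow> nat \<Rightarrow> real \<Rightarrow> real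
     \<Rightarrow> (nat \<Rightarrow> 'a list) \<Rightarrow> (nat \<Rightarrow> 'b list set) \<Rightarrow> bool" where
  "DI_code M W n N l1 l2 u E \<longleftrightarrow>
     (\<forall>j<N. length (u j) = n \<and> set (u j) \<subseteq> space M \<and> E j \<subseteq> {ys. length ys = n} \<and>
            Wset W (u j) (E j) \<ge> 1 - l1) \<and>
     (\<forall>j<N. \<forall>k<N. j \<noteq> k \<longrightarrow> Wset W (u j) (E k) \<le> l2)"

definition N_DI :: "'a measure \<Rightarrow> ('a \<Rightarrow> 'b::finite \<Rightarrow> real) \<Rightarrow> nat \<Rightarrow> real \<Rightarrow> real \<Rightarrow> enat" where
  "N_DI M W n l1 l2 = Sup {enat N | N. \<exists>u E. DI_code M W n N l1 l2 u E}"

definition DI_rate :: "'a measure \<Rightarrow> ('a \<Rightarrow> 'b::finite \<Rightarrow> real) \<Rightarrow> nat \<Rightarrow> real \<Rightarrow> real \<Rightarrow> ereal" where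
  "DI_rate M W n l1 l2 =
     (case N_DI M W n l1 l2 of
        enat N \<Rightarrow> ereal (log 2 (real N) / (real n * log 2 (real n)))
      | \<infinity> \<Rightarrow> \<infinity>)"

definition C_opt_DI :: "'a measure \<Rightarrow> ('a \<Rightarrow> 'b::finite \<Rightarrow> real) \<Rightarrow> ereal" where
  "C_opt_DI M W = (INF l1\<in>{0<..}. INF l2\<in>{0<..}. limsup (\<lambda>n. DI_rate M W n l1 l2))"

definition sqrt_tilde :: "'a measure \<Rightarrow> ('a \<Rightarrow> 'b::finite \<Rightarrow> real) \<Rightarrow> (real^'b) set" where
  "sqrt_tilde M W = (\<lambda>x. \<chi> y. sqrt (W x y)) ` space M"

definition covering_number :: "'c::metric_space set \<Rightarrow> real \<Rightarrow> nat" where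
  "covering_number F \<delta> =
     Inf {card C | C. finite C \<and> C \<subseteq> F \<and> F \<subseteq> (\<Union>c\<in>C. cball c \<delta>)}"

definition upper_minkowski_dim :: "'c::metric_space set \<Rightarrow> ereal" where
  "upper_minkowski_dim F =
     Limsup (at_right 0) (\<lambda>\<delta>. ereal (log 2 (real (covering_number F \<delta>)) / (- log 2 \<delta>)))"

end

theory Submission
  imports Defs
begin


definition pd :: "('a \<Rightarrow> 'b::finite \<Rightarrow> real) \<Rightarrow> 'a \<Rightarrow> bool" where
  "pd W x \<longleftrightarrow> (\<forall>y. 0 \<le> W x y) \<and> (\<Sum>y\<in>UNIV. W x y) = 1"

lemma finite_len: "finite {ys::'b::finite list. length ys = n}"
  using finite_lists_length_eq[of "UNIV::'b set" n] by simp

lemma sum_lists_Suc: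
  "(\<Sum>ys\<in>{ys::'b::finite list. length ys = Suc n}. f ys) = (\<Sum>y\<in>UNIV. \<Sum>ys\<in>{ys. length ys = n}. f (y#ys))"
proof -
  have eq: "{ys::'b list. length ys = Suc n} = (\<lambda>(y,ys). y#ys) ` (UNIV \<times> {ys. length ys = n})"
    by (auto simp: image_iff length_Suc_conv)
  have inj: "inj_on (\<lambda>(y,ys). y#ys) (UNIV \<times> {ys::'b list. length ys = n})"
    by (auto simp: inj_on_def)
  have "(\<Sum>ys\<in>{ys::'b::finite list. length ys = Suc n}. f ys) = (\<Sum>p\<in>UNIV \<times> {ys. length ys = n}. f (fst p # snd p))"
    unfolding eq by (subst sum.reindex[OF inj]) (simp add: case_prod_beta)
  also have "\<dots> = (\<Sum>y\<in>UNIV. \<Sum>ys\<in>{ys. length ys = n}. f (y#ys))"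
    by (simp add: sum.cartesian_product case_prod_beta)
  finally show ?thesis .
qed

lemma sum_lists_0: "(\<Sum>ys\<in>{ys::'b::finite list. length ys = 0}. f ys) = f []"
  by simp

lemma Wseq_Cons: "Wseq W (x#xs) (y#ys) = W x y * Wseq W xs ys"
  unfolding Wseq_def by (simp del: prod.lessThan_Suc add: prod.lessThan_Suc_shift)

lemma Wseq_Nil: "Wseq W [] ys = 1"
  unfolding Wseq_def by simp

lemma Wseq_nonneg: "\<forall>x\<in>set xs. pd W x \<Longrightarrow> 0 \<le> Wseq W xs ys"
  unfolding Wseq_def pd_def by (auto intro!: prod_nonneg)

lemma Wseq_total:
  assumes "\<forall>x\<in>set xs. pd W x"
  shows "(\<Sum>ys\<in>{ys::'b::finite list. length ys = length xs}. Wseq W xs ys) = 1"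
  using assms
proof (induction xs)
  case Nil
  then show ?case by (simp add: Wseq_Nil)
next
  case (Cons x xs)
  have "(\<Sum>ys\<in>{ys::'b list. length ys = length (x#xs)}. Wseq W (x#xs) ys)
      = (\<Sum>y\<in>UNIV. W x y * (\<Sum>ys\<in>{ys. length ys = length xs}. Wseq W xs ys))"
    by (simp add: sum_lists_Suc Wseq_Cons sum_distrib_left)
  also have "\<dots> = 1" using Cons by (simp add: pd_def)
  finally show ?case .
qed

lemma Wseq_mean:
  assumes "\<forall>x\<in>set xs. pd W x"
  shows "(\<Sum>ys\<in>{ys::'b::finite list. length ys = length xs}. Wseq W xs ys * (\<Sum>i<length xs. h i (ys!i)))
     = (\<Sum>i<length xs. \<Sum>y\<in>UNIV. W (xs!i) y * h i y)"
  using assms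
proof (induction xs arbitrary: h)
  case Nil
  then show ?case by simp
next
  case (Cons x xs)
  let ?L = "{ys::'b list. length ys = length xs}"
  have tot: "(\<Sum>ys\<in>?L. Wseq W xs ys) = 1" using Cons.prems Wseq_total by auto
  have IH: "(\<Sum>ys\<in>?L. Wseq W xs ys * (\<Sum>i<length xs. h (Suc i) (ys!i)))
     = (\<Sum>i<length xs. \<Sum>y\<in>UNIV. W (xs!i) y * h (Suc i) y)"
    using Cons by auto
  have "(\<Sum>ys\<in>{ys::'b list. length ys = length (x#xs)}. Wseq W (x#xs) ys * (\<Sum>i<length (x#xs). h i (ys!i)))
      = (\<Sum>y\<in>UNIV. \<Sum>ys\<in>?L. W x y * Wseq W xs ys * (h 0 y + (\<Sum>i<length xs. h (Suc i) (ys!i))))"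
    by (simp del: sum.lessThan_Suc add: sum_lists_Suc Wseq_Cons sum.lessThan_Suc_shift)
  also have "\<dots> = (\<Sum>y\<in>UNIV. W x y * h 0 y * (\<Sum>ys\<in>?L. Wseq W xs ys)
      + W x y * (\<Sum>ys\<in>?L. Wseq W xs ys * (\<Sum>i<length xs. h (Suc i) (ys!i))))"
    by (simp add: algebra_simps sum.distrib sum_distrib_left)
  also have "\<dots> = (\<Sum>y\<in>UNIV. W x y * h 0 y) + (\<Sum>y\<in>UNIV. W x y) * (\<Sum>i<length xs. \<Sum>y\<in>UNIV. W (xs!i) y * h (Suc i) y)"
    by (simp add: tot IH sum.distrib sum_distrib_right)
  also have "\<dots> = (\<Sum>i<length (x#xs). \<Sum>y\<in>UNIV. W ((x#xs)!i) y * h i y)"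
    using Cons.prems by (simp del: sum.lessThan_Suc add: pd_def sum.lessThan_Suc_shift)
  finally show ?case .
qed

lemma Wseq_var0:
  assumes "\<forall>x\<in>set xs. pd W x"
    and "\<forall>i<length xs. (\<Sum>y\<in>UNIV. W (xs!i) y * k i y) = 0"
  shows "(\<Sum>ys\<in>{ys::'b::finite list. length ys = length xs}. Wseq W xs ys * (\<Sum>i<length xs. k i (ys!i))^2)
     = (\<Sum>i<length xs. \<Sum>y\<in>UNIV. W (xs!i) y * (k i y)^2)"
  using assms
proof (induction xs arbitrary: k)
  case Nil
  then show ?case by simp
next
  case (Cons x xs)
  let ?L = "{ys::'b list. length ys = length xs}"
  let ?S = "\<lambda>ys. (\<Sum>i<length xs. k (Suc i) (ys!i))"
  have tot: "(\<Sum>ys\<in>?L. Wseq W xs ys) = 1" using Cons.prems Wseq_total by auto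
  have m0: "(\<Sum>ys\<in>?L. Wseq W xs ys * ?S ys) = 0"
  proof -
    have "\<forall>i<length xs. (\<Sum>y\<in>UNIV. W (xs!i) y * k (Suc i) y) = 0"
      using Cons.prems(2) by auto
    then show ?thesis using Wseq_mean[of xs W "\<lambda>i. k (Suc i)"] Cons.prems by auto
  qed
  have IH: "(\<Sum>ys\<in>?L. Wseq W xs ys * (?S ys)^2)
     = (\<Sum>i<length xs. \<Sum>y\<in>UNIV. W (xs!i) y * (k (Suc i) y)^2)"
  proof -
    have "\<forall>i<length xs. (\<Sum>y\<in>UNIV. W (xs!i) y * k (Suc i) y) = 0"
      using Cons.prems(2) by auto
    then show ?thesis using Cons.IH[of "\<lambda>i. k (Suc i)"] Cons.prems by auto
  qed
  have "(\<Sum>ys\<in>{ys::'b list. length ys = length (x#xs)}. Wseq W (x#xs) ys * (\<Sum>i<length (x#xs). k i (ys!i))^2)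
      = (\<Sum>y\<in>UNIV. \<Sum>ys\<in>?L. W x y * Wseq W xs ys * (k 0 y + ?S ys)^2)"
    by (simp del: sum.lessThan_Suc add: sum_lists_Suc Wseq_Cons sum.lessThan_Suc_shift)
  also have "\<dots> = (\<Sum>y\<in>UNIV. W x y * (k 0 y)^2 * (\<Sum>ys\<in>?L. Wseq W xs ys)
      + 2 * W x y * k 0 y * (\<Sum>ys\<in>?L. Wseq W xs ys * ?S ys)
      + W x y * (\<Sum>ys\<in>?L. Wseq W xs ys * (?S ys)^2))"
    by (simp add: power2_eq_square algebra_simps sum.distrib sum_distrib_left)
  also have "\<dots> = (\<Sum>y\<in>UNIV. W x y * (k 0 y)^2) + (\<Sum>y\<in>UNIV. W x y) * (\<Sum>i<length xs. \<Sum>y\<in>UNIV. W (xs!i) y * (k (Suc i) y)^2)"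
    by (simp add: tot IH m0 sum.distrib sum_distrib_right)
  also have "\<dots> = (\<Sum>i<length (x#xs). \<Sum>y\<in>UNIV. W ((x#xs)!i) y * (k i y)^2)"
    using Cons.prems by (simp del: sum.lessThan_Suc add: pd_def sum.lessThan_Suc_shift)
  finally show ?case .
qed

lemma Wseq_fid:
  assumes "\<forall>x\<in>set xs. pd W x" "\<forall>x\<in>set xs'. pd W x" "length xs' = length xs"
  shows "(\<Sum>ys\<in>{ys::'b::finite list. length ys = length xs}. sqrt (Wseq W xs ys * Wseq W xs' ys))
     = (\<Prod>i<length xs. \<Sum>y\<in>UNIV. sqrt (W (xs!i) y * W (xs'!i) y))"
  using assms
proof (induction xs arbitrary: xs')
  case Nil
  then show ?case by (simp add: Wseq_Nil)
next
  case (Cons x xs)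
  then obtain x' xs'' where xs': "xs' = x' # xs''" by (cases xs') auto
  let ?L = "{ys::'b list. length ys = length xs}"
  have IH: "(\<Sum>ys\<in>?L. sqrt (Wseq W xs ys * Wseq W xs'' ys)) = (\<Prod>i<length xs. \<Sum>y\<in>UNIV. sqrt (W (xs!i) y * W (xs''!i) y))"
    using Cons xs' by auto
  have "(\<Sum>ys\<in>{ys::'b list. length ys = length (x#xs)}. sqrt (Wseq W (x#xs) ys * Wseq W xs' ys))
     = (\<Sum>y\<in>UNIV. \<Sum>ys\<in>?L. sqrt (W x y * W x' y) * sqrt (Wseq W xs ys * Wseq W xs'' ys))"
    by (simp add: sum_lists_Suc Wseq_Cons xs' real_sqrt_mult[symmetric] algebra_simps)
  also have "\<dots> = (\<Sum>y\<in>UNIV. sqrt (W x y * W x' y)) * (\<Sum>ys\<in>?L. sqrt (Wseq W xs ys * Wseq W xs'' ys))"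
    by (simp add: sum_distrib_left sum_distrib_right sum.swap[of _ UNIV])
  also have "\<dots> = (\<Prod>i<length (x#xs). \<Sum>y\<in>UNIV. sqrt (W ((x#xs)!i) y * W (xs'!i) y))"
    by (simp del: prod.lessThan_Suc add: IH prod.lessThan_Suc_shift xs')
  finally show ?case .
qed



lemma cover_exists:
  fixes F :: "'c::heine_borel set"
  assumes "bounded F" "0 < d"
  shows "\<exists>C. finite C \<and> C \<subseteq> F \<and> F \<subseteq> (\<Union>c\<in>C. cball c d)"
proof -
  have "seq_compact (closure F)" using assms compact_closure compact_imp_seq_compact by blast
  then obtain k where k: "finite k" "k \<subseteq> closure F" "closure F \<subseteq> (\<Union>x\<in>k. ball x (d/2))"
    using seq_compact_imp_totally_bounded[of "closure F"] assms(2) by (meson half_gt_zero)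
  define K where "K = {x\<in>k. ball x (d/2) \<inter> F \<noteq> {}}"
  define f where "f x = (SOME z. z \<in> ball x (d/2) \<inter> F)" for x
  have f: "f x \<in> ball x (d/2) \<inter> F" if "x \<in> K" for x
  proof -
    have "\<exists>z. z \<in> ball x (d/2) \<inter> F" using that unfolding K_def by auto
    then show ?thesis unfolding f_def by (rule someI_ex)
  qed
  show ?thesis
  proof (intro exI conjI)
    show "finite (f ` K)" using k(1) unfolding K_def by simp
    show "f ` K \<subseteq> F" using f by auto
    show "F \<subseteq> (\<Union>c\<in>f ` K. cball c d)"
    proof
      fix z assume z: "z \<in> F"
      then obtain x where x: "x \<in> k" "z \<in> ball x (d/2)" using k(3) closure_subset by blast
      then have xK: "x \<in> K" using z unfolding K_def by auto
      have "dist (f x) z \<le> dist (f x) x + dist x z" by (rule dist_triangle)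
      also have "\<dots> < d" using f[OF xK] x(2) by (simp add: dist_commute)
      finally have "dist (f x) z \<le> d" by simp
      then show "z \<in> (\<Union>c\<in>f ` K. cball c d)" using xK by auto
    qed
  qed
qed

lemma covering_attained:
  fixes F :: "'c::heine_borel set"
  assumes "bounded F" "0 < d"
  shows "\<exists>C. finite C \<and> C \<subseteq> F \<and> F \<subseteq> (\<Union>c\<in>C. cball c d) \<and> card C = covering_number F d"
proof -
  let ?K = "{card C | C. finite C \<and> C \<subseteq> F \<and> F \<subseteq> (\<Union>c\<in>C. cball c d)}"
  have "?K \<noteq> {}" using cover_exists[OF assms] by blast
  then have "Inf ?K \<in> ?K" by (rule Inf_nat_def1)
  then show ?thesis unfolding covering_number_def by auto
qed

lemma covering_pos:
  fixes F :: "'c::heine_borel set"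
  assumes "bounded F" "0 < d" "F \<noteq> {}"
  shows "1 \<le> covering_number F d"
proof -
  obtain C where C: "finite C" "C \<subseteq> F" "F \<subseteq> (\<Union>c\<in>C. cball c d)" "card C = covering_number F d"
    using covering_attained[OF assms(1,2)] by blast
  then have "C \<noteq> {}" using assms(3) by auto
  then have "card C > 0" using C(1) by (simp add: card_gt_0_iff)
  then show ?thesis using C(4) by simp
qed

lemma channel_pd: "channel M W \<Longrightarrow> x \<in> space M \<Longrightarrow> pd W x"
  unfolding channel_def pd_def by auto

lemma pd_le1: assumes "pd W x" shows "W x y \<le> (1::real)"
proof -
  have "W x y \<le> (\<Sum>y'\<in>UNIV. W x y')"
    using assms unfolding pd_def by (intro member_le_sum) auto
  then show ?thesis using assms unfolding pd_def by simp
qed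

definition sv :: "('a \<Rightarrow> 'b::finite \<Rightarrow> real) \<Rightarrow> 'a \<Rightarrow> real^'b" where
  "sv W x = (\<chi> y. sqrt (W x y))"

definition fid :: "('a \<Rightarrow> 'b::finite \<Rightarrow> real) \<Rightarrow> 'a \<Rightarrow> 'a \<Rightarrow> real" where
  "fid W a b = (\<Sum>y\<in>UNIV. sqrt (W a y * W b y))"

lemma sqrt_tilde_sv: "sqrt_tilde M W = sv W ` space M"
  unfolding sqrt_tilde_def sv_def by simp

lemma dist_sv_sq:
  assumes "pd W a" "pd W b"
  shows "(dist (sv W a) (sv W b))^2 = 2 - 2 * fid W a b"
proof -
  have "(dist (sv W a) (sv W b))^2 = (\<Sum>y\<in>UNIV. (sqrt (W a y) - sqrt (W b y))^2)"
    unfolding dist_vec_def L2_set_def sv_def by (simp add: dist_real_def sum_nonneg)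
  also have "\<dots> = (\<Sum>y\<in>UNIV. W a y + W b y - 2 * sqrt (W a y * W b y))"
    using assms unfolding pd_def
    by (intro sum.cong) (auto simp: power2_diff real_sqrt_mult)
  also have "\<dots> = 2 - 2 * fid W a b"
    using assms unfolding pd_def fid_def by (simp add: sum.distrib sum_subtractf sum_distrib_left)
  finally show ?thesis .
qed

lemma norm_sv: assumes "pd W a" shows "norm (sv W a) = 1"
proof -
  have "norm (sv W a) = sqrt (\<Sum>y\<in>UNIV. (sqrt (W a y))^2)"
    unfolding norm_vec_def L2_set_def sv_def by simp
  also have "\<dots> = 1" using assms unfolding pd_def by simp
  finally show ?thesis .
qed

lemma bounded_sqrt_tilde:
  assumes "channel M W" shows "bounded (sqrt_tilde M W)"
proof -
  have "sqrt_tilde M W \<subseteq> cball 0 1"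
    using assms by (auto simp: sqrt_tilde_sv norm_sv channel_pd)
  then show ?thesis using bounded_cball bounded_subset by blast
qed

lemma fid_nonneg: "pd W a \<Longrightarrow> pd W b \<Longrightarrow> 0 \<le> fid W a b"
  unfolding fid_def pd_def by (simp add: sum_nonneg)

lemma prod_one_minus:
  fixes a :: "nat \<Rightarrow> real"
  assumes "\<And>i. i < n \<Longrightarrow> 0 \<le> a i \<and> a i \<le> 1"
  shows "1 - (\<Sum>i<n. a i) \<le> (\<Prod>i<n. 1 - a i)"
  using assms
proof (induction n)
  case 0 then show ?case by simp
next
  case (Suc n)
  have IH: "1 - (\<Sum>i<n. a i) \<le> (\<Prod>i<n. 1 - a i)" using Suc by auto
  have p0: "0 \<le> (\<Prod>i<n. 1 - a i)" "(\<Prod>i<n. 1 - a i) \<le> 1"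
    using Suc.prems by (auto intro!: prod_nonneg prod_le_1)
  have an: "0 \<le> a n" "a n \<le> 1" using Suc.prems by auto
  have "1 - (\<Sum>i<Suc n. a i) = (1 - (\<Sum>i<n. a i)) - a n" by simp
  also have "\<dots> \<le> (\<Prod>i<n. 1 - a i) - a n * (\<Prod>i<n. 1 - a i)"
    using IH p0 an mult_left_le[of "(\<Prod>i<n. 1 - a i)" "a n"] by (smt (verit) mult_left_le_one_le)
  also have "\<dots> = (\<Prod>i<Suc n. 1 - a i)" by (simp add: algebra_simps)
  finally show ?case .
qed



lemma tv_bound:
  fixes xs xs' :: "'a list" and W :: "'a \<Rightarrow> 'b::finite \<Rightarrow> real"
  assumes "\<forall>x\<in>set xs. pd W x" "\<forall>x\<in>set xs'. pd W x" "length xs' = length xs"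
    and "E \<subseteq> {ys. length ys = length xs}"
  shows "Wset W xs E - Wset W xs' E \<le> 2 * sqrt (2 - 2 * (\<Sum>ys\<in>{ys. length ys = length xs}. sqrt (Wseq W xs ys * Wseq W xs' ys)))"
proof -
  let ?L = "{ys::'b list. length ys = length xs}"
  let ?P = "Wseq W xs" and ?Q = "Wseq W xs'"
  let ?F = "(\<Sum>ys\<in>?L. sqrt (?P ys * ?Q ys))"
  have finL: "finite ?L" by (rule finite_len)
  have finE: "finite E" using assms(4) finL finite_subset by blast
  have P0: "0 \<le> ?P ys" "0 \<le> ?Q ys" for ys using assms Wseq_nonneg by blast+
  have tP: "(\<Sum>ys\<in>?L. ?P ys) = 1" using Wseq_total assms(1) by blast
  have tQ: "(\<Sum>ys\<in>?L. ?Q ys) = 1" using Wseq_total[of xs' W] assms(2,3) by simp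
  have "Wset W xs E - Wset W xs' E = (\<Sum>ys\<in>E. ?P ys - ?Q ys)"
    unfolding Wset_def by (simp add: sum_subtractf)
  also have "\<dots> \<le> (\<Sum>ys\<in>E. \<bar>?P ys - ?Q ys\<bar>)" by (intro sum_mono) auto
  also have "\<dots> \<le> (\<Sum>ys\<in>?L. \<bar>?P ys - ?Q ys\<bar>)" by (intro sum_mono2 finL assms(4)) auto
  also have "\<dots> = (\<Sum>ys\<in>?L. \<bar>sqrt (?P ys) - sqrt (?Q ys)\<bar> * (sqrt (?P ys) + sqrt (?Q ys)))"
  proof (intro sum.cong refl)
    fix ys
    have "?P ys - ?Q ys = (sqrt (?P ys) - sqrt (?Q ys)) * (sqrt (?P ys) + sqrt (?Q ys))"
      using P0[of ys] by (simp add: algebra_simps)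
    then show "\<bar>?P ys - ?Q ys\<bar> = \<bar>sqrt (?P ys) - sqrt (?Q ys)\<bar> * (sqrt (?P ys) + sqrt (?Q ys))"
      using P0[of ys] by (simp add: abs_mult)
  qed
  also have "\<dots> \<le> 2 * sqrt (2 - 2 * ?F)"
  proof -
    let ?S = "(\<Sum>ys\<in>?L. \<bar>sqrt (?P ys) - sqrt (?Q ys)\<bar> * (sqrt (?P ys) + sqrt (?Q ys)))"
    have m: "(\<Sum>ys\<in>?L. (\<bar>sqrt (?P ys) - sqrt (?Q ys)\<bar>)^2) = 2 - 2 * ?F"
    proof -
      have "(\<Sum>ys\<in>?L. (\<bar>sqrt (?P ys) - sqrt (?Q ys)\<bar>)^2) = (\<Sum>ys\<in>?L. ?P ys + ?Q ys - 2 * sqrt (?P ys * ?Q ys))"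
        using P0 by (intro sum.cong) (auto simp: power2_diff real_sqrt_mult)
      then show ?thesis using tP tQ by (simp add: sum.distrib sum_subtractf sum_distrib_left)
    qed
    have p: "(\<Sum>ys\<in>?L. (sqrt (?P ys) + sqrt (?Q ys))^2) = 2 + 2 * ?F"
    proof -
      have "(\<Sum>ys\<in>?L. (sqrt (?P ys) + sqrt (?Q ys))^2) = (\<Sum>ys\<in>?L. ?P ys + ?Q ys + 2 * sqrt (?P ys * ?Q ys))"
        using P0 by (intro sum.cong) (auto simp: power2_sum real_sqrt_mult)
      then show ?thesis using tP tQ by (simp add: sum.distrib sum_distrib_left)
    qed
    have F1: "?F \<le> 1"
    proof -
      have "0 \<le> (\<Sum>ys\<in>?L. (\<bar>sqrt (?P ys) - sqrt (?Q ys)\<bar>)^2)" by (simp add: sum_nonneg)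
      then show ?thesis using m by simp
    qed
    have "?S^2 \<le> (2 - 2 * ?F) * (2 + 2 * ?F)"
      using Cauchy_Schwarz_ineq_sum[of "\<lambda>ys. \<bar>sqrt (?P ys) - sqrt (?Q ys)\<bar>" "\<lambda>ys. sqrt (?P ys) + sqrt (?Q ys)" ?L]
      m p by simp
    also have "\<dots> \<le> 8 - 8 * ?F"
    proof -
      have "(2 - 2 * ?F) * (2 + 2 * ?F) = 8 - 8 * ?F - 4 * (1 - ?F)^2"
        by (simp add: algebra_simps power2_eq_square)
      then show ?thesis by simp
    qed
    also have "\<dots> = (2 * sqrt (2 - 2 * ?F))^2"
      using F1 by (simp add: power_mult_distrib)
    finally have "?S^2 \<le> (2 * sqrt (2 - 2 * ?F))^2" .
    moreover have "0 \<le> 2 * sqrt (2 - 2 * ?F)" using F1 by simp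
    ultimately show ?thesis by (rule power2_le_imp_le)
  qed
  finally show ?thesis .
qed

lemma close_words:
  fixes xs xs' :: "'a list" and W :: "'a \<Rightarrow> 'b::finite \<Rightarrow> real"
  assumes "\<forall>x\<in>set xs. pd W x" "\<forall>x\<in>set xs'. pd W x" "length xs' = length xs"
    and "E \<subseteq> {ys. length ys = length xs}"
    and "\<forall>i<length xs. dist (sv W (xs!i)) (sv W (xs'!i)) \<le> 2 * d" and d0: "0 \<le> d"
  shows "Wset W xs E - Wset W xs' E \<le> 4 * d * sqrt (length xs)"
proof -
  let ?n = "length xs"
  let ?f = "\<lambda>i. fid W (xs!i) (xs'!i)"
  have pdi: "pd W (xs!i)" "pd W (xs'!i)" if "i < ?n" for i
    using assms(1,2,3) that by auto
  have fi: "?f i = 1 - (dist (sv W (xs!i)) (sv W (xs'!i)))^2 / 2" if "i < ?n" for i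
    using dist_sv_sq[OF pdi[OF that]] by (simp add: field_simps)
  have ai: "0 \<le> 1 - ?f i \<and> 1 - ?f i \<le> 1" if "i < ?n" for i
    using fi[OF that] fid_nonneg[OF pdi[OF that]] by simp
  have ai2: "1 - ?f i \<le> 2 * d^2" if "i < ?n" for i
  proof -
    have "(dist (sv W (xs!i)) (sv W (xs'!i)))^2 \<le> (2*d)^2"
      using assms(5) that by (intro power_mono) auto
    then show ?thesis using fi[OF that] by (simp add: power_mult_distrib)
  qed
  have "(\<Sum>ys\<in>{ys. length ys = length xs}. sqrt (Wseq W xs ys * Wseq W xs' ys)) = (\<Prod>i<?n. ?f i)"
    using Wseq_fid[OF assms(1,2,3)] unfolding fid_def by simp
  also have "\<dots> = (\<Prod>i<?n. 1 - (1 - ?f i))" by simp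
  also have "\<dots> \<ge> 1 - (\<Sum>i<?n. 1 - ?f i)" by (rule prod_one_minus) (use ai in auto)
  finally have F: "1 - (\<Sum>i<?n. 1 - ?f i) \<le> (\<Sum>ys\<in>{ys. length ys = length xs}. sqrt (Wseq W xs ys * Wseq W xs' ys))" .
  have "(\<Sum>i<?n. 1 - ?f i) \<le> (\<Sum>i<?n. 2 * d^2)" by (intro sum_mono ai2) auto
  then have s: "(\<Sum>i<?n. 1 - ?f i) \<le> ?n * (2 * d^2)" by simp
  have "Wset W xs E - Wset W xs' E \<le> 2 * sqrt (2 - 2 * (\<Sum>ys\<in>{ys. length ys = length xs}. sqrt (Wseq W xs ys * Wseq W xs' ys)))"
    by (rule tv_bound[OF assms(1-4)])
  also have "\<dots> \<le> 2 * sqrt (4 * d^2 * ?n)"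
    using F s by (intro mult_left_mono real_sqrt_le_mono) (auto simp: algebra_simps)
  also have "\<dots> = 4 * d * sqrt ?n"
    using d0 by (simp add: real_sqrt_mult)
  finally show ?thesis .
qed

lemma code_upper:
  fixes W :: "'a \<Rightarrow> 'b::finite \<Rightarrow> real"
  assumes ch: "channel M W" and code: "DI_code M W n N l1 l2 u E"
    and d: "0 < d" "4 * d * sqrt n < 1 - l1 - l2"
    and C: "finite C" "sqrt_tilde M W \<subseteq> (\<Union>c\<in>C. cball c d)"
  shows "N \<le> card C ^ n"
proof -
  define q where "q x = (SOME c. c \<in> C \<and> dist c (sv W x) \<le> d)" for x
  have q: "q x \<in> C \<and> dist (q x) (sv W x) \<le> d" if "x \<in> space M" for x
  proof -
    have "sv W x \<in> sqrt_tilde M W" using that by (simp add: sqrt_tilde_sv)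
    then obtain c where "c \<in> C" "sv W x \<in> cball c d" using C(2) by blast
    then have "\<exists>c. c \<in> C \<and> dist c (sv W x) \<le> d" by auto
    then show ?thesis unfolding q_def by (rule someI_ex)
  qed
  have cj: "length (u j) = n \<and> set (u j) \<subseteq> space M \<and> E j \<subseteq> {ys. length ys = n} \<and> Wset W (u j) (E j) \<ge> 1 - l1"
    if "j < N" for j using code that unfolding DI_code_def by auto
  have cjk: "Wset W (u k) (E j) \<le> l2" if "j < N" "k < N" "j \<noteq> k" for j k
    using code that unfolding DI_code_def by auto
  have inj: "inj_on (\<lambda>j. map q (u j)) {..<N}"
  proof (rule inj_onI, rule ccontr)
    fix j k assume j: "j \<in> {..<N}" and k: "k \<in> {..<N}" and eq: "map q (u j) = map q (u k)" and ne: "j \<noteq> k"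
    have lj: "length (u j) = n" and lk: "length (u k) = n" using cj j k by auto
    have pdj: "\<forall>x\<in>set (u j). pd W x" and pdk: "\<forall>x\<in>set (u k). pd W x"
    proof -
      have "set (u j) \<subseteq> space M" "set (u k) \<subseteq> space M" using cj j k by auto
      then show "\<forall>x\<in>set (u j). pd W x" "\<forall>x\<in>set (u k). pd W x" using channel_pd[OF ch] by auto
    qed
    have "\<forall>i<length (u j). dist (sv W (u j!i)) (sv W (u k!i)) \<le> 2 * d"
    proof (intro allI impI)
      fix i assume i: "i < length (u j)"
      have sj: "set (u j) \<subseteq> space M" and sk: "set (u k) \<subseteq> space M" using cj j k by auto
      have mj: "u j ! i \<in> space M" using sj i nth_mem by blast
      have mk: "u k ! i \<in> space M" using sk i lj lk nth_mem by (metis subsetD)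
      have qq: "q (u j ! i) = q (u k ! i)" using arg_cong[OF eq, of "\<lambda>l. l!i"] i lj lk by simp
      have "dist (sv W (u j!i)) (sv W (u k!i)) \<le> dist (sv W (u j!i)) (q (u j ! i)) + dist (q (u k ! i)) (sv W (u k!i))"
        using dist_triangle[of "sv W (u j!i)" "sv W (u k!i)" "q (u k ! i)"] qq by simp
      also have "\<dots> \<le> 2 * d" using q[OF mj] q[OF mk] by (simp add: dist_commute)
      finally show "dist (sv W (u j!i)) (sv W (u k!i)) \<le> 2 * d" .
    qed
    then have "Wset W (u j) (E j) - Wset W (u k) (E j) \<le> 4 * d * sqrt (length (u j))"
      using cj[of j] j d(1) by (intro close_words pdj pdk) (auto simp: lj lk)
    moreover have "Wset W (u j) (E j) - Wset W (u k) (E j) \<ge> 1 - l1 - l2"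
      using cj[of j] cjk[of j k] j k ne by auto
    ultimately show False using d lj by simp
  qed
  have img: "(\<lambda>j. map q (u j)) ` {..<N} \<subseteq> {xs. set xs \<subseteq> C \<and> length xs = n}"
  proof
    fix z assume "z \<in> (\<lambda>j. map q (u j)) ` {..<N}"
    then obtain j where j: "j < N" "z = map q (u j)" by auto
    have "set (u j) \<subseteq> space M" "length (u j) = n" using cj j by auto
    then show "z \<in> {xs. set xs \<subseteq> C \<and> length xs = n}" using j q by auto
  qed
  have "N = card {..<N}" by simp
  also have "\<dots> \<le> card {xs. set xs \<subseteq> C \<and> length xs = n}"
    by (rule card_inj_on_le[OF inj img]) (simp add: C(1) finite_lists_length_eq)
  also have "\<dots> = card C ^ n" by (simp add: C(1) card_lists_length_eq)
  finally show ?thesis .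
qed

lemma N_DI_le:
  assumes "\<And>N u E. DI_code M W n N l1 l2 u E \<Longrightarrow> N \<le> K"
  shows "N_DI M W n l1 l2 \<le> enat K"
  unfolding N_DI_def by (rule Sup_least) (use assms in auto)

lemma N_DI_ge:
  assumes "DI_code M W n N l1 l2 u E"
  shows "enat N \<le> N_DI M W n l1 l2"
  unfolding N_DI_def by (rule Sup_upper) (use assms in auto)

lemma code_one:
  assumes ch: "channel M W" and x: "x \<in> space M" and "0 \<le> l1"
  shows "DI_code M W n 1 l1 l2 (\<lambda>_. replicate n x) (\<lambda>_. {ys. length ys = n})"
proof -
  have "\<forall>z\<in>set (replicate n x). pd W z" using ch x channel_pd by auto
  then have "Wset W (replicate n x) {ys. length ys = n} = 1"
    unfolding Wset_def using Wseq_total[of "replicate n x" W] by simp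
  then show ?thesis unfolding DI_code_def using x assms(3) by auto
qed



lemma N_DI_finite:
  fixes W :: "'a \<Rightarrow> 'b::finite \<Rightarrow> real"
  assumes ch: "channel M W" and ne: "space M \<noteq> {}" and l: "0 \<le> l1"
    and le: "N_DI M W n l1 l2 \<le> enat K"
  shows "\<exists>N. N_DI M W n l1 l2 = enat N \<and> 1 \<le> N \<and> N \<le> K"
proof -
  obtain x where x: "x \<in> space M" using ne by auto
  have "enat 1 \<le> N_DI M W n l1 l2" by (rule N_DI_ge[OF code_one[OF ch x l]])
  with le show ?thesis by (cases "N_DI M W n l1 l2") auto
qed

lemma rate_upper_n:
  fixes W :: "'a \<Rightarrow> 'b::finite \<Rightarrow> real"
  assumes ch: "channel M W" and ne: "space M \<noteq> {}" and l: "0 < l1" "0 < l2"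
    and n: "2 \<le> n" and d: "0 < d" "4 * d * sqrt n < 1 - l1 - l2"
  shows "DI_rate M W n l1 l2 \<le> ereal (log 2 (covering_number (sqrt_tilde M W) d) / log 2 n)"
proof -
  let ?F = "sqrt_tilde M W"
  let ?G = "covering_number ?F d"
  obtain C where C: "finite C" "C \<subseteq> ?F" "?F \<subseteq> (\<Union>c\<in>C. cball c d)" "card C = ?G"
    using covering_attained[OF bounded_sqrt_tilde[OF ch] d(1)] by blast
  have G1: "1 \<le> ?G"
    using covering_pos[OF bounded_sqrt_tilde[OF ch] d(1)] ne by (simp add: sqrt_tilde_def)
  have "N_DI M W n l1 l2 \<le> enat (?G ^ n)"
    by (rule N_DI_le) (use code_upper[OF ch _ d C(1) C(3)] C(4) in auto)
  then obtain N where N: "N_DI M W n l1 l2 = enat N" "1 \<le> N" "N \<le> ?G ^ n"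
    using N_DI_finite[OF ch ne] l by (meson less_imp_le)
  have ln: "0 < log 2 n" using n by simp
  have "log 2 N \<le> log 2 (real (?G ^ n))"
    using N G1 by (intro log_le_cancel_iff[THEN iffD2]) (auto simp del: of_nat_power)
  also have "\<dots> = n * log 2 ?G" using G1 by (simp add: log_nat_power)
  finally have "log 2 N / (n * log 2 n) \<le> n * log 2 ?G / (n * log 2 n)"
    using n ln by (intro divide_right_mono) auto
  also have "\<dots> = log 2 ?G / log 2 n" using n by simp
  finally show ?thesis unfolding DI_rate_def using N(1) by simp
qed

lemma minkowski_nonneg:
  fixes W :: "'a \<Rightarrow> 'b::finite \<Rightarrow> real"
  assumes ch: "channel M W" and ne: "space M \<noteq> {}"
  shows "0 \<le> upper_minkowski_dim (sqrt_tilde M W)"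
  unfolding upper_minkowski_dim_def
proof (rule le_Limsup)
  show "at_right (0::real) \<noteq> bot" by simp
  have "eventually (\<lambda>d::real. 0 < d \<and> d < 1) (at_right 0)"
    by (simp add: eventually_at_right_field) (meson zero_less_one)
  then show "\<forall>\<^sub>F d in at_right 0. 0 \<le> ereal (log 2 (real (covering_number (sqrt_tilde M W) d)) / - log 2 d)"
  proof (rule eventually_mono)
    fix d :: real assume d: "0 < d \<and> d < 1"
    have "1 \<le> covering_number (sqrt_tilde M W) d"
      using covering_pos[OF bounded_sqrt_tilde[OF ch]] d ne by (simp add: sqrt_tilde_def)
    then have "0 \<le> log 2 (real (covering_number (sqrt_tilde M W) d))" by simp
    moreover have "0 < - log 2 d" using d by simp
    ultimately show "0 \<le> ereal (log 2 (real (covering_number (sqrt_tilde M W) d)) / - log 2 d)"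
      by (simp add: divide_nonneg_pos del: minus_divide_right divide_minus_right)
  qed
qed



lemma lim_K_log: "((\<lambda>n::nat. K / log 2 (real n)) \<longlongrightarrow> 0) sequentially"
proof -
  have *: "((\<lambda>n::nat. (K * ln 2) / ln (real n)) \<longlongrightarrow> 0) sequentially"
    by (rule tendsto_divide_0[OF tendsto_const filterlim_at_top_imp_at_infinity[OF
          filterlim_compose[OF ln_at_top filterlim_real_sequentially]]])
  have eq: "(\<lambda>n::nat. (K * ln 2) / ln (real n)) = (\<lambda>n::nat. K / log 2 (real n))"
    by (rule ext) (simp add: log_def)
  show ?thesis using * unfolding eq .
qed

lemma lim_c_sqrt: "((\<lambda>n::nat. c / sqrt (real n)) \<longlongrightarrow> 0) sequentially"
  by (rule tendsto_divide_0[OF tendsto_const filterlim_at_top_imp_at_infinity[OF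
          filterlim_compose[OF sqrt_at_top filterlim_real_sequentially]]])

lemma log2_sqrt: "0 \<le> x \<Longrightarrow> log 2 (sqrt x) = log 2 x / 2"
  by (simp add: log_def ln_sqrt)

lemma upper_bound:
  fixes W :: "'a \<Rightarrow> 'b::finite \<Rightarrow> real"
  assumes ch: "channel M W" and ne: "space M \<noteq> {}" and l: "0 < l1" "0 < l2" "l1 + l2 < 1"
  shows "limsup (\<lambda>n. DI_rate M W n l1 l2) \<le> ereal (1/2) * upper_minkowski_dim (sqrt_tilde M W)"
proof -
  let ?F = "sqrt_tilde M W"
  let ?D = "upper_minkowski_dim ?F"
  let ?phi = "\<lambda>d. ereal (log 2 (real (covering_number ?F d)) / (- log 2 d))"
  show ?thesis
  proof (cases "?D = \<infinity>")
    case True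
    then show ?thesis by simp
  next
    case False
    with minkowski_nonneg[OF ch ne] obtain d0 where D: "?D = ereal d0" "0 \<le> d0"
      by (cases ?D) auto
    have "limsup (\<lambda>n. DI_rate M W n l1 l2) \<le> ereal (d0/2) + ereal eps" if eps: "0 < eps" for eps
    proof -
      define e where "e = d0 + eps"
      have "?D < ereal e" using D eps e_def by simp
      then have ev1: "eventually (\<lambda>d. ?phi d < ereal e) (at_right 0)"
        unfolding upper_minkowski_dim_def by (rule Limsup_lessD)
      define c where "c = (1 - l1 - l2) / 8"
      have c: "0 < c" "c < 1" using l unfolding c_def by auto
      define dl where "dl n = c / sqrt (real n)" for n :: nat
      have "filterlim dl (at_right 0) sequentially"
      proof (rule tendsto_imp_filterlim_at_right)
        show "(dl \<longlongrightarrow> 0) sequentially" unfolding dl_def by (rule lim_c_sqrt)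
        show "\<forall>\<^sub>F n in sequentially. 0 < dl n"
          using eventually_gt_at_top[of "0::nat"] by eventually_elim (use c in \<open>simp add: dl_def\<close>)
      qed
      then have ev2: "eventually (\<lambda>n. ?phi (dl n) < ereal e) sequentially"
      proof -
        from \<open>filterlim dl (at_right 0) sequentially\<close> have
          "\<forall>P. eventually P (at_right 0) \<longrightarrow> eventually (\<lambda>n. P (dl n)) sequentially"
          unfolding filterlim_iff .
        from this[rule_format, OF ev1] show ?thesis .
      qed
      have ev3: "eventually (\<lambda>n. e * (- log 2 c) / log 2 (real n) < eps/2) sequentially"
        by (rule order_tendstoD(2)[OF lim_K_log[of "e * (- log 2 c)"]]) (use eps in simp)
      have "eventually (\<lambda>n. DI_rate M W n l1 l2 \<le> ereal (d0/2 + eps)) sequentially"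
        using ev2 ev3 eventually_ge_at_top[of "2::nat"]
      proof eventually_elim
        case (elim n)
        have n2: "2 \<le> n" using elim by simp
        have sn: "0 < sqrt (real n)" using n2 by simp
        have dpos: "0 < dl n" using c sn by (simp add: dl_def)
        have "4 * dl n * sqrt n = 4 * c" using sn by (simp add: dl_def)
        then have cond: "4 * dl n * sqrt n < 1 - l1 - l2" using c l by (simp add: c_def)
        have r: "DI_rate M W n l1 l2 \<le> ereal (log 2 (covering_number ?F (dl n)) / log 2 n)"
          by (rule rate_upper_n[OF ch ne l(1,2) n2 dpos cond])
        have ldl: "- log 2 (dl n) = log 2 n / 2 - log 2 c"
          using c sn n2 by (simp add: dl_def log_divide log2_sqrt)
        have ln: "0 < log 2 n" using n2 by simp
        have pos: "0 < - log 2 (dl n)"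
        proof -
          have "log 2 c < 0" using c by simp
          then show ?thesis using ldl ln by simp
        qed
        have X: "e * (- log 2 c) / log 2 n < eps/2" using elim(2) by simp
        have "log 2 (covering_number ?F (dl n)) / (- log 2 (dl n)) < e" using elim(1) by simp
        then have "log 2 (covering_number ?F (dl n)) < e * (- log 2 (dl n))"
        proof -
          have gen: "\<And>a b e::real. 0 < b \<Longrightarrow> a / b < e \<Longrightarrow> a < e * b"
            by (simp add: pos_divide_less_eq)
          show ?thesis by (rule gen[OF pos]) fact
        qed
        then have "log 2 (covering_number ?F (dl n)) / log 2 n < e * (- log 2 (dl n)) / log 2 n"
          using ln by (rule divide_strict_right_mono)
        also have "e * (- log 2 (dl n)) / log 2 n = e / 2 + e * (- log 2 c) / log 2 n"
          using ln unfolding ldl by (simp add: field_simps)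
        finally have L: "log 2 (covering_number ?F (dl n)) / log 2 n < e / 2 + e * (- log 2 c) / log 2 n" .
        have gen: "a < d0/2+eps" if "a < (d0+eps)/2 + b" "b < eps/2" for a b :: real
          using that by (simp add: field_simps)
        have "log 2 (covering_number ?F (dl n)) / log 2 n < d0/2 + eps"
          using L X unfolding e_def by (rule gen)
        then have "ereal (log 2 (covering_number ?F (dl n)) / log 2 n) \<le> ereal (d0/2 + eps)"
          by simp
        with r show ?case by (rule order_trans)
      qed
      then have "limsup (\<lambda>n. DI_rate M W n l1 l2) \<le> ereal (d0/2 + eps)"
        by (rule Limsup_bounded)
      then show ?thesis by simp
    qed
    then have "limsup (\<lambda>n. DI_rate M W n l1 l2) \<le> ereal (d0/2)"
      by (rule ereal_le_epsilon2)
    moreover have "ereal (1/2) * upper_minkowski_dim (sqrt_tilde M W) = ereal (d0/2)"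
      using D(1) by simp
    ultimately show ?thesis by simp
  qed
qed



definition hdist :: "'a list \<Rightarrow> 'a list \<Rightarrow> nat" where
  "hdist u v = (\<Sum>i<length u. if u!i = v!i then 0 else 1)"

lemma hdist_Cons: "hdist (a#u) (b#v) = (if a = b then 0 else 1) + hdist u v"
  unfolding hdist_def by (simp del: sum.lessThan_Suc add: sum.lessThan_Suc_shift)

lemma hdist_self: "hdist u u = 0"
  unfolding hdist_def by simp

lemma hdist_sym: "length u = length v \<Longrightarrow> hdist u v = hdist v u"
  unfolding hdist_def by (intro sum.cong) auto

definition words :: "'a set \<Rightarrow> nat \<Rightarrow> 'a list set" where
  "words A n = {xs. set xs \<subseteq> A \<and> length xs = n}"

lemma words_Suc: "words A (Suc n) = (\<lambda>(b,v). b#v) ` (A \<times> words A n)"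
  unfolding words_def by (auto simp: image_iff length_Suc_conv)

lemma sum_words_Suc:
  assumes "finite A"
  shows "(\<Sum>xs\<in>words A (Suc n). f xs) = (\<Sum>b\<in>A. \<Sum>v\<in>words A n. f (b#v))"
proof -
  have inj: "inj_on (\<lambda>(b,v). b#v) (A \<times> words A n)" by (auto simp: inj_on_def)
  have "(\<Sum>xs\<in>words A (Suc n). f xs) = (\<Sum>p\<in>A \<times> words A n. f (fst p # snd p))"
    unfolding words_Suc by (subst sum.reindex[OF inj]) (simp add: case_prod_beta)
  also have "\<dots> = (\<Sum>b\<in>A. \<Sum>v\<in>words A n. f (b#v))"
    by (simp add: sum.cartesian_product case_prod_beta)
  finally show ?thesis .
qed

lemma finite_words: "finite A \<Longrightarrow> finite (words A n)"
  unfolding words_def by (rule finite_lists_length_eq)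

lemma card_words: "finite A \<Longrightarrow> card (words A n) = card A ^ n"
  unfolding words_def by (rule card_lists_length_eq)

lemma genfun:
  fixes t :: real
  assumes A: "finite A" and c: "c \<in> words A n"
  shows "(\<Sum>v\<in>words A n. t ^ hdist c v) = (1 + (real (card A) - 1) * t) ^ n"
  using c
proof (induction n arbitrary: c)
  case 0
  have "words A 0 = {[]}" unfolding words_def by auto
  then show ?case using 0 by (simp add: hdist_def words_def)
next
  case (Suc n)
  have cw: "set c \<subseteq> A" "length c = Suc n" using Suc.prems unfolding words_def by auto
  then obtain a c' where c0: "c = a # c'" by (cases c) auto
  then have c: "c = a # c'" "a \<in> A" "c' \<in> words A n" using cw unfolding words_def by auto
  have IH: "(\<Sum>v\<in>words A n. t ^ hdist c' v) = (1 + (real (card A) - 1) * t) ^ n"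
    using Suc.IH c(3) .
  have sb: "(\<Sum>b\<in>A. t ^ (if a = b then 0 else 1)) = 1 + (real (card A) - 1) * t"
  proof -
    have "(\<Sum>b\<in>A. t ^ (if a = b then 0 else 1)) = (\<Sum>b\<in>insert a (A - {a}). t ^ (if a = b then 0 else 1))"
      using c(2) by (simp add: insert_absorb)
    also have "\<dots> = 1 + (\<Sum>b\<in>A - {a}. t ^ (if a = b then 0 else 1))"
      using A by (subst sum.insert) auto
    also have "(\<Sum>b\<in>A - {a}. t ^ (if a = b then 0 else 1)) = (\<Sum>b\<in>A - {a}. t)"
      by (intro sum.cong) auto
    also have "\<dots> = (real (card A) - 1) * t"
    proof -
      have "0 < card A" using A c(2) by (auto simp: card_gt_0_iff)
      then show ?thesis using A c(2) by (simp add: card_Diff_singleton of_nat_diff Suc_leI)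
    qed
    finally show ?thesis .
  qed
  have "(\<Sum>v\<in>words A (Suc n). t ^ hdist c v) = (\<Sum>b\<in>A. \<Sum>v\<in>words A n. t ^ (if a = b then 0 else 1) * t ^ hdist c' v)"
    unfolding sum_words_Suc[OF A] c(1) hdist_Cons by (simp add: power_add)
  also have "\<dots> = (\<Sum>b\<in>A. t ^ (if a = b then 0 else 1)) * (\<Sum>v\<in>words A n. t ^ hdist c' v)"
    by (simp add: sum_distrib_left sum_distrib_right sum.swap[of _ A])
  also have "\<dots> = (1 + (real (card A) - 1) * t) ^ Suc n" using sb IH by simp
  finally show ?case .
qed

lemma hball_card:
  assumes A: "finite A" "A \<noteq> {}" and c: "c \<in> words A n"
  shows "card {v\<in>words A n. hdist c v < k} \<le> 2^n * card A ^ k"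
proof -
  let ?m = "real (card A)"
  have m: "1 \<le> ?m" using A by (simp add: Suc_leI card_gt_0_iff)
  let ?t = "1 / ?m"
  have t: "0 < ?t" "?t \<le> 1" using m by auto
  let ?B = "{v\<in>words A n. hdist c v < k}"
  have "real (card ?B) * ?t ^ k = (\<Sum>v\<in>?B. ?t ^ k)" by simp
  also have "\<dots> \<le> (\<Sum>v\<in>?B. ?t ^ hdist c v)"
    using t by (intro sum_mono power_decreasing) auto
  also have "\<dots> \<le> (\<Sum>v\<in>words A n. ?t ^ hdist c v)"
    using t A by (intro sum_mono2 finite_words) auto
  also have "\<dots> = (1 + (?m - 1) * ?t) ^ n" by (rule genfun[OF A(1) c])
  also have "\<dots> \<le> 2 ^ n"
  proof -
    have e1: "(?m - 1) * ?t = 1 - ?t" using m by (simp add: diff_divide_distrib)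
    have "0 \<le> 1 + (1 - ?t)" "1 + (1 - ?t) \<le> 2" using t by linarith+
    then show ?thesis unfolding e1 by (intro power_mono) auto
  qed
  finally have "real (card ?B) * ?t ^ k \<le> 2 ^ n" .
  moreover have "?t ^ k = 1 / ?m ^ k" by (simp add: power_one_over)
  ultimately have "real (card ?B) / ?m ^ k \<le> 2 ^ n" by simp
  then have "real (card ?B) \<le> 2 ^ n * ?m ^ k"
    using m by (simp add: pos_divide_le_eq)
  then have "real (card ?B) \<le> real (2 ^ n * card A ^ k)" by simp
  then show ?thesis by (simp only: of_nat_le_iff)
qed

lemma GV:
  assumes A: "finite A" "A \<noteq> {}" and k: "1 \<le> k"
  shows "\<exists>C. C \<subseteq> words A n \<and> (\<forall>u\<in>C. \<forall>v\<in>C. u \<noteq> v \<longrightarrow> k \<le> hdist u v)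
            \<and> card A ^ n \<le> card C * (2^n * card A ^ k)"
proof -
  let ?P = "\<lambda>C. C \<subseteq> words A n \<and> (\<forall>u\<in>C. \<forall>v\<in>C. u \<noteq> v \<longrightarrow> k \<le> hdist u v)"
  have fw: "finite (words A n)" using A(1) by (rule finite_words)
  have P0: "?P {}" by simp
  have bnd: "\<forall>C. ?P C \<longrightarrow> card C < Suc (card (words A n))"
  proof (intro allI impI)
    fix C assume "?P C"
    then have "card C \<le> card (words A n)" using fw by (intro card_mono) auto
    then show "card C < Suc (card (words A n))" by simp
  qed
  have ex: "\<exists>C. ?P C \<and> (\<forall>C'. ?P C' \<longrightarrow> card C' \<le> card C)"
    by (rule Lattices_Big.ex_has_greatest_nat[of ?P "{}" card "Suc (card (words A n))", OF P0 bnd])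
  from ex obtain C where CC: "?P C \<and> (\<forall>C'. ?P C' \<longrightarrow> card C' \<le> card C)" by (rule exE)
  have C: "?P C" using CC by (rule conjunct1)
  have mx: "\<forall>C'. ?P C' \<longrightarrow> card C' \<le> card C" using CC by (rule conjunct2)
  have "C \<subseteq> words A n" using C by simp
  then have fC: "finite C" using fw by (rule finite_subset)
  have cov: "words A n \<subseteq> (\<Union>c\<in>C. {v\<in>words A n. hdist c v < k})"
  proof
    fix v assume v: "v \<in> words A n"
    show "v \<in> (\<Union>c\<in>C. {v\<in>words A n. hdist c v < k})"
    proof (rule ccontr)
      assume "\<not> ?thesis"
      then have far: "\<forall>c\<in>C. k \<le> hdist c v" using v by auto
      then have vC: "v \<notin> C" using k hdist_self[of v] by force
      have "?P (insert v C)"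
      proof -
        have "\<forall>c\<in>C. k \<le> hdist v c"
        proof
          fix c assume cC: "c \<in> C"
          then have "c \<in> words A n" using C by auto
          then have "length c = length v" using v unfolding words_def by simp
          then show "k \<le> hdist v c" using far cC hdist_sym by metis
        qed
        then show ?thesis using C v far by auto
      qed
      then have "card (insert v C) \<le> card C" using mx by blast
      then show False using vC fC by simp
    qed
  qed
  have "card A ^ n = card (words A n)" using A by (simp add: card_words)
  also have "\<dots> \<le> card (\<Union>c\<in>C. {v\<in>words A n. hdist c v < k})"
    using cov fC fw by (intro card_mono) auto
  also have "\<dots> \<le> (\<Sum>c\<in>C. card {v\<in>words A n. hdist c v < k})"
    by (rule card_UN_le[OF fC])
  also have "\<dots> \<le> (\<Sum>c\<in>C. 2^n * card A ^ k)"
  proof (rule sum_mono)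
    fix c assume "c \<in> C"
    then have "c \<in> words A n" using \<open>C \<subseteq> words A n\<close> by blast
    then show "card {v\<in>words A n. hdist c v < k} \<le> 2^n * card A ^ k" by (rule hball_card[OF A])
  qed
  also have "\<dots> = card C * (2^n * card A ^ k)" by simp
  finally have fin: "card A ^ n \<le> card C * (2^n * card A ^ k)" .
  have C2: "\<forall>u\<in>C. \<forall>v\<in>C. u \<noteq> v \<longrightarrow> k \<le> hdist u v" using C by (rule conjunct2)
  show ?thesis
    by (rule exI[of _ C], intro conjI) (fact \<open>C \<subseteq> words A n\<close>, fact C2, fact fin)
qed

lemma pigeonhole_fib:
  assumes S: "finite S" and T: "finite T" "T \<noteq> {}" and f: "f ` S \<subseteq> T"
  shows "\<exists>b\<in>T. card S \<le> card T * card {x\<in>S. f x = b}"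
proof -
  let ?g = "\<lambda>b. card {x\<in>S. f x = b}"
  obtain b where b: "b \<in> T" "\<forall>b'\<in>T. ?g b' \<le> ?g b"
  proof -
    have "Max (?g ` T) \<in> ?g ` T" using T by (intro Max_in) auto
    then obtain b where "b \<in> T" "?g b = Max (?g ` T)" by auto
    moreover have "\<forall>b'\<in>T. ?g b' \<le> Max (?g ` T)" using T by auto
    ultimately show ?thesis using that by auto
  qed
  have "S = (\<Union>b\<in>T. {x\<in>S. f x = b})" using f by auto
  then have "card S \<le> (\<Sum>b\<in>T. ?g b)" using card_UN_le[OF T(1), of "\<lambda>b. {x\<in>S. f x = b}"] by simp
  also have "\<dots> \<le> (\<Sum>b'\<in>T. ?g b)" using b by (intro sum_mono) auto
  also have "\<dots> = card T * ?g b" by simp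
  finally show ?thesis using b by blast
qed



definition sepset :: "'a measure \<Rightarrow> ('a \<Rightarrow> 'b::finite \<Rightarrow> real) \<Rightarrow> real \<Rightarrow> 'a set \<Rightarrow> bool" where
  "sepset M W d A \<longleftrightarrow> A \<subseteq> space M \<and> finite A \<and> (\<forall>a\<in>A. \<forall>b\<in>A. a \<noteq> b \<longrightarrow> d < dist (sv W a) (sv W b))"

lemma covering_number_le:
  assumes "finite C" "C \<subseteq> F" "F \<subseteq> (\<Union>c\<in>C. cball c d)"
  shows "covering_number F d \<le> card C"
  unfolding covering_number_def Inf_nat_def by (rule Least_le) (use assms in blast)

lemma sepset_bound:
  fixes W :: "'a \<Rightarrow> 'b::finite \<Rightarrow> real"
  assumes d: "0 < d" and C: "finite C" "sqrt_tilde M W \<subseteq> (\<Union>c\<in>C. cball c (d/2))"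
    and A: "sepset M W d A"
  shows "card A \<le> card C"
proof -
  define g where "g a = (SOME c. c \<in> C \<and> dist c (sv W a) \<le> d/2)" for a
  have g: "g a \<in> C \<and> dist (g a) (sv W a) \<le> d/2" if "a \<in> A" for a
  proof -
    have "a \<in> space M" using A that unfolding sepset_def by auto
    then have "sv W a \<in> sqrt_tilde M W" by (simp add: sqrt_tilde_sv)
    then obtain c where "c \<in> C" "sv W a \<in> cball c (d/2)" using C(2) by blast
    then have "\<exists>c. c \<in> C \<and> dist c (sv W a) \<le> d/2" by auto
    then show ?thesis unfolding g_def by (rule someI_ex)
  qed
  have "inj_on g A"
  proof (rule inj_onI, rule ccontr)
    fix a b assume a: "a \<in> A" and b: "b \<in> A" and eq: "g a = g b" and ne: "a \<noteq> b"
    have "dist (sv W a) (sv W b) \<le> dist (sv W a) (g a) + dist (g a) (sv W b)" by (rule dist_triangle)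
    also have "\<dots> \<le> d" using g[OF a] g[OF b] eq by (simp add: dist_commute)
    finally have "dist (sv W a) (sv W b) \<le> d" .
    moreover have "d < dist (sv W a) (sv W b)" using A a b ne unfolding sepset_def by blast
    ultimately show False by simp
  qed
  moreover have "g ` A \<subseteq> C" using g by auto
  ultimately show ?thesis using C(1) by (rule card_inj_on_le)
qed

lemma packing:
  fixes W :: "'a \<Rightarrow> 'b::finite \<Rightarrow> real"
  assumes ch: "channel M W" and d: "0 < d"
  shows "\<exists>A. sepset M W d A \<and> covering_number (sqrt_tilde M W) d \<le> card A"
proof -
  obtain C where C: "finite C" "sqrt_tilde M W \<subseteq> (\<Union>c\<in>C. cball c (d/2))"
    using cover_exists[OF bounded_sqrt_tilde[OF ch], of "d/2"] d by auto
  let ?P = "sepset M W d"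
  have P0: "?P {}" unfolding sepset_def by simp
  have bnd: "\<forall>A. ?P A \<longrightarrow> card A < Suc (card C)"
    using sepset_bound[OF d C] by (simp add: less_Suc_eq_le)
  have ex: "\<exists>A. ?P A \<and> (\<forall>A'. ?P A' \<longrightarrow> card A' \<le> card A)"
    by (rule Lattices_Big.ex_has_greatest_nat[of ?P "{}" card "Suc (card C)", OF P0 bnd])
  from ex obtain A where AA: "?P A \<and> (\<forall>A'. ?P A' \<longrightarrow> card A' \<le> card A)" by (rule exE)
  have A: "?P A" using AA by (rule conjunct1)
  have mx: "\<forall>A'. ?P A' \<longrightarrow> card A' \<le> card A" using AA by (rule conjunct2)
  have As: "A \<subseteq> space M" "finite A" and Asep: "\<forall>a\<in>A. \<forall>b\<in>A. a \<noteq> b \<longrightarrow> d < dist (sv W a) (sv W b)"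
    using A unfolding sepset_def by auto
  have cov: "sqrt_tilde M W \<subseteq> (\<Union>c\<in>sv W ` A. cball c d)"
  proof
    fix z assume "z \<in> sqrt_tilde M W"
    then obtain x where x: "x \<in> space M" "z = sv W x" by (auto simp: sqrt_tilde_sv)
    show "z \<in> (\<Union>c\<in>sv W ` A. cball c d)"
    proof (rule ccontr)
      assume nz: "\<not> ?thesis"
      have far: "\<forall>a\<in>A. d < dist (sv W a) (sv W x)"
      proof
        fix a assume "a \<in> A"
        then have "\<not> dist (sv W a) z \<le> d" using nz by auto
        then show "d < dist (sv W a) (sv W x)" using x by simp
      qed
      have xA: "x \<notin> A" using far d by fastforce
      have "?P (insert x A)"
        unfolding sepset_def
      proof (intro conjI)
        show "insert x A \<subseteq> space M" using As x by auto
        show "finite (insert x A)" using As by auto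
        show "\<forall>a\<in>insert x A. \<forall>b\<in>insert x A. a \<noteq> b \<longrightarrow> d < dist (sv W a) (sv W b)"
          using Asep far by (auto simp: dist_commute)
      qed
      then have "card (insert x A) \<le> card A" using mx by blast
      then show False using xA As by simp
    qed
  qed
  have "covering_number (sqrt_tilde M W) d \<le> card (sv W ` A)"
    by (rule covering_number_le) (use As cov in \<open>auto simp: sqrt_tilde_sv\<close>)
  also have "\<dots> \<le> card A" using As by (simp add: card_image_le)
  finally show ?thesis using A by blast
qed



definition lp :: "real \<Rightarrow> ('a \<Rightarrow> 'b::finite \<Rightarrow> real) \<Rightarrow> 'a \<Rightarrow> 'b \<Rightarrow> real" where
  "lp e W x y = ln (max (W x y) e)"

definition Dv :: "real \<Rightarrow> ('a \<Rightarrow> 'b::finite \<Rightarrow> real) \<Rightarrow> 'a \<Rightarrow> 'a \<Rightarrow> real" where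
  "Dv e W a b = (\<Sum>y\<in>UNIV. W b y * (lp e W b y - lp e W a y))"

lemma lp_bounds:
  assumes "pd W x" "0 < e" "e \<le> 1"
  shows "ln e \<le> lp e W x y \<and> lp e W x y \<le> 0"
proof -
  have "W x y \<le> 1" using pd_le1[OF assms(1)] .
  then have "max (W x y) e \<le> 1" using assms by simp
  moreover have "e \<le> max (W x y) e" by simp
  ultimately show ?thesis unfolding lp_def using assms(2) by auto
qed

lemma term_lower:
  fixes p q e :: real
  assumes p: "0 \<le> p" "p \<le> 1" and q: "0 \<le> q" and e: "0 < e"
  shows "2 * p - 2 * sqrt (max q e * p) \<le> p * (ln (max p e) - ln (max q e))"
proof (cases "p = 0")
  case True
  then show ?thesis by simp
next
  case False
  then have pp: "0 < p" using p by simp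
  define qt where "qt = max q e"
  have qt: "0 < qt" unfolding qt_def using e by simp
  define r where "r = sqrt (qt / p)"
  have r: "0 < r" unfolding r_def using qt pp by simp
  have r2: "r^2 = qt / p" unfolding r_def using qt pp by simp
  have "ln qt - ln p = ln (qt / p)" using qt pp by (simp add: ln_div)
  also have "\<dots> = ln (r^2)" using r2 by simp
  also have "\<dots> = 2 * ln r" using r by (simp add: ln_realpow)
  finally have l1: "ln qt - ln p = 2 * ln r" .
  have l2: "ln r \<le> r - 1" using r by (rule ln_le_minus_one)
  have pr: "p * r = sqrt (qt * p)"
  proof -
    have "p * r = sqrt (p^2) * sqrt (qt / p)" unfolding r_def using pp by simp
    also have "\<dots> = sqrt (p^2 * (qt / p))" by (rule real_sqrt_mult[symmetric])
    also have "p^2 * (qt / p) = qt * p" using pp by (simp add: power2_eq_square)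
    finally show ?thesis .
  qed
  have "ln p \<le> ln (max p e)" using pp by simp
  then have "p * (ln p - ln qt) \<le> p * (ln (max p e) - ln qt)" using pp by (intro mult_left_mono) auto
  moreover have "p * (ln p - ln qt) = - 2 * p * ln r" using l1 by (simp add: algebra_simps)
  moreover have "- 2 * p * ln r \<ge> - 2 * p * (r - 1)" using l2 pp by (simp add: mult_left_mono)
  moreover have "- 2 * p * (r - 1) = 2 * p - 2 * sqrt (qt * p)" using pr by (simp add: algebra_simps)
  ultimately show ?thesis unfolding qt_def by linarith
qed

lemma Dv_lower:
  fixes W :: "'a \<Rightarrow> 'b::finite \<Rightarrow> real"
  assumes a: "pd W a" and b: "pd W b" and e: "0 < e"
  shows "(dist (sv W a) (sv W b))^2 - 2 * real CARD('b) * sqrt e \<le> Dv e W a b"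
proof -
  have pb: "0 \<le> W b y" "W b y \<le> 1" for y using b pd_le1[OF b] unfolding pd_def by auto
  have pa: "0 \<le> W a y" for y using a unfolding pd_def by auto
  have t1: "2 * W b y - 2 * sqrt (max (W a y) e * W b y) \<le> W b y * (lp e W b y - lp e W a y)" for y
    unfolding lp_def by (rule term_lower[OF pb(1) pb(2) pa e])
  have t2: "sqrt (max (W a y) e * W b y) \<le> sqrt (W a y * W b y) + sqrt e" for y
  proof -
    have "max (W a y) e * W b y \<le> (W a y + e) * W b y"
      using pa[of y] pb[of y] e by (intro mult_right_mono) auto
    also have "\<dots> \<le> W a y * W b y + e"
      using pb[of y] e by (simp add: algebra_simps mult_left_le)
    finally have "sqrt (max (W a y) e * W b y) \<le> sqrt (W a y * W b y + e)" by simp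
    also have "\<dots> \<le> sqrt (W a y * W b y) + sqrt e"
      using pa[of y] pb[of y] e by (intro sqrt_add_le_add_sqrt) auto
    finally show ?thesis .
  qed
  have "(\<Sum>y\<in>UNIV. 2 * W b y - 2 * (sqrt (W a y * W b y) + sqrt e)) \<le> Dv e W a b"
    unfolding Dv_def using t1 t2 by (intro sum_mono) (smt (verit))
  moreover have "(\<Sum>y\<in>UNIV. 2 * W b y - 2 * (sqrt (W a y * W b y) + sqrt e))
      = 2 - 2 * fid W a b - 2 * real CARD('b) * sqrt e"
    using b unfolding pd_def fid_def by (simp add: sum_subtractf sum.distrib sum_distrib_left[symmetric] algebra_simps)
  moreover have "(dist (sv W a) (sv W b))^2 = 2 - 2 * fid W a b" by (rule dist_sv_sq[OF a b])
  ultimately show ?thesis by simp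
qed

lemma Dv_self: "Dv e W a a = 0"
  unfolding Dv_def by simp

lemma cheb:
  fixes xs :: "'a list" and W :: "'a \<Rightarrow> 'b::finite \<Rightarrow> real"
  assumes pd: "\<forall>x\<in>set xs. pd W x" and S: "S \<subseteq> {ys. length ys = length xs}" and t: "0 < t"
    and far: "\<forall>ys\<in>S. t \<le> \<bar>G ys - mu\<bar>"
  shows "Wset W xs S \<le> (\<Sum>ys\<in>{ys. length ys = length xs}. Wseq W xs ys * (G ys - mu)^2) / t^2"
proof -
  let ?L = "{ys::'b list. length ys = length xs}"
  have fL: "finite ?L" by (rule finite_len)
  have "Wset W xs S = (\<Sum>ys\<in>S. Wseq W xs ys)" unfolding Wset_def ..
  also have "\<dots> \<le> (\<Sum>ys\<in>S. Wseq W xs ys * (G ys - mu)^2 / t^2)"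
  proof (rule sum_mono)
    fix ys assume ys: "ys \<in> S"
    have "t^2 \<le> (G ys - mu)^2"
      using far ys t by (metis abs_le_square_iff abs_of_pos)
    then have "1 \<le> (G ys - mu)^2 / t^2" using t by simp
    then show "Wseq W xs ys \<le> Wseq W xs ys * (G ys - mu)^2 / t^2"
      using Wseq_nonneg[OF pd, of ys] by (metis mult_left_mono mult.right_neutral times_divide_eq_right)
  qed
  also have "\<dots> \<le> (\<Sum>ys\<in>?L. Wseq W xs ys * (G ys - mu)^2 / t^2)"
    using S fL Wseq_nonneg[OF pd] by (intro sum_mono2) auto
  also have "\<dots> = (\<Sum>ys\<in>?L. Wseq W xs ys * (G ys - mu)^2) / t^2"
    by (simp add: sum_divide_distrib)
  finally show ?thesis .
qed

lemma var_bound: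
  fixes xs :: "'a list" and W :: "'a \<Rightarrow> 'b::finite \<Rightarrow> real"
  assumes pd: "\<forall>x\<in>set xs. pd W x" and h: "\<And>i y. i < length xs \<Longrightarrow> - B \<le> h i y \<and> h i y \<le> 0"
  shows "(\<Sum>ys\<in>{ys. length ys = length xs}. Wseq W xs ys *
           ((\<Sum>i<length xs. h i (ys!i)) - (\<Sum>i<length xs. \<Sum>y\<in>UNIV. W (xs!i) y * h i y))^2)
         \<le> real (length xs) * B^2"
proof -
  let ?n = "length xs"
  define m where "m i = (\<Sum>y\<in>UNIV. W (xs!i) y * h i y)" for i
  define k where "k i y = h i y - m i" for i y
  have pdi: "pd W (xs!i)" if "i < ?n" for i using pd that by auto
  have mb: "- B \<le> m i \<and> m i \<le> 0" if i: "i < ?n" for i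
  proof -
    have "(\<Sum>y\<in>UNIV. W (xs!i) y * (- B)) \<le> m i"
      unfolding m_def using h[OF i] pdi[OF i] unfolding pd_def by (intro sum_mono mult_left_mono) auto
    moreover have "m i \<le> (\<Sum>y\<in>UNIV. W (xs!i) y * 0)"
      unfolding m_def using h[OF i] pdi[OF i] unfolding pd_def by (intro sum_mono mult_left_mono) auto
    moreover have "(\<Sum>y\<in>UNIV. W (xs!i) y * (- B)) = - B"
    proof -
      have "(\<Sum>y\<in>UNIV. W (xs!i) y * (- B)) = (\<Sum>y\<in>UNIV. W (xs!i) y) * (- B)"
        by (rule sum_distrib_right[symmetric])
      then show ?thesis using pdi[OF i] unfolding pd_def by simp
    qed
    ultimately show ?thesis by simp
  qed
  have k0: "\<forall>i<?n. (\<Sum>y\<in>UNIV. W (xs!i) y * k i y) = 0"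
  proof (intro allI impI)
    fix i assume i: "i < ?n"
    have "(\<Sum>y\<in>UNIV. W (xs!i) y * k i y) = m i - (\<Sum>y\<in>UNIV. W (xs!i) y) * m i"
      unfolding k_def m_def by (simp add: algebra_simps sum_subtractf sum_distrib_right)
    then show "(\<Sum>y\<in>UNIV. W (xs!i) y * k i y) = 0" using pdi[OF i] unfolding pd_def by simp
  qed
  have eq: "(\<Sum>i<?n. h i (ys!i)) - (\<Sum>i<?n. m i) = (\<Sum>i<?n. k i (ys!i))" for ys
    unfolding k_def by (simp add: sum_subtractf)
  have "(\<Sum>ys\<in>{ys. length ys = ?n}. Wseq W xs ys * ((\<Sum>i<?n. h i (ys!i)) - (\<Sum>i<?n. m i))^2)
      = (\<Sum>ys\<in>{ys. length ys = ?n}. Wseq W xs ys * (\<Sum>i<?n. k i (ys!i))^2)"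
    by (simp only: eq)
  also have "\<dots> = (\<Sum>i<?n. \<Sum>y\<in>UNIV. W (xs!i) y * (k i y)^2)"
    by (rule Wseq_var0[OF pd k0])
  also have "\<dots> \<le> (\<Sum>i<?n. B^2)"
  proof (rule sum_mono)
    fix i assume "i \<in> {..<?n}"
    then have i: "i < ?n" by simp
    have kk: "(k i y)^2 \<le> B^2" for y
    proof -
      have "\<bar>k i y\<bar> \<le> B" using h[OF i, of y] mb[OF i] unfolding k_def by linarith
      then show ?thesis by (metis abs_le_square_iff abs_of_nonneg abs_ge_zero order_trans power2_abs abs_le_self_iff)
    qed
    have "(\<Sum>y\<in>UNIV. W (xs!i) y * (k i y)^2) \<le> (\<Sum>y\<in>UNIV. W (xs!i) y * B^2)"
      using pdi[OF i] kk unfolding pd_def by (intro sum_mono mult_left_mono) auto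
    also have "\<dots> = B^2" using pdi[OF i] unfolding pd_def by (simp add: sum_distrib_right[symmetric])
    finally show "(\<Sum>y\<in>UNIV. W (xs!i) y * (k i y)^2) \<le> B^2" .
  qed
  also have "\<dots> = real ?n * B^2" by simp
  finally show ?thesis unfolding m_def .
qed



definition gs :: "real \<Rightarrow> ('a \<Rightarrow> 'b::finite \<Rightarrow> real) \<Rightarrow> 'a list \<Rightarrow> 'b list \<Rightarrow> real" where
  "gs e W u ys = (\<Sum>i<length u. lp e W (u!i) (ys!i))"

definition mu :: "real \<Rightarrow> ('a \<Rightarrow> 'b::finite \<Rightarrow> real) \<Rightarrow> 'a list \<Rightarrow> 'a list \<Rightarrow> real" where
  "mu e W u v = (\<Sum>i<length u. \<Sum>y\<in>UNIV. W (v!i) y * lp e W (u!i) y)"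

lemma Dv_sep:
  fixes W :: "'a \<Rightarrow> 'b::finite \<Rightarrow> real"
  assumes ch: "channel M W" and A: "sepset M W d A" and a: "a \<in> A" and b: "b \<in> A" and ab: "a \<noteq> b"
    and d: "0 < d" and e: "e = (d^2 / (4 * real CARD('b)))^2"
  shows "d^2 / 2 \<le> Dv e W a b"
proof -
  have am: "a \<in> space M" "b \<in> space M" using A a b unfolding sepset_def by auto
  have pa: "pd W a" "pd W b" using channel_pd[OF ch am(1)] channel_pd[OF ch am(2)] by auto
  have Y: "0 < real CARD('b)" by simp
  have e0: "0 < e" unfolding e using d Y by simp
  have se: "sqrt e = d^2 / (4 * real CARD('b))" unfolding e using d Y by simp
  have dd: "d < dist (sv W a) (sv W b)" using A a b ab unfolding sepset_def by blast
  then have "d^2 \<le> (dist (sv W a) (sv W b))^2" using d by (intro power_mono) auto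
  moreover have "2 * real CARD('b) * sqrt e = d^2 / 2" unfolding se using Y by (simp add: field_simps)
  moreover note Dv_lower[OF pa(1) pa(2) e0]
  ultimately show ?thesis by linarith
qed

lemma mean_gap:
  fixes W :: "'a \<Rightarrow> 'b::finite \<Rightarrow> real"
  assumes ch: "channel M W" and A: "sepset M W d A" and u: "u \<in> words A n" and v: "v \<in> words A n"
    and d: "0 < d" and e: "e = (d^2 / (4 * real CARD('b)))^2"
  shows "d^2 / 2 * real (hdist u v) \<le> mu e W v v - mu e W u v"
proof -
  have lu: "length u = n" and lv: "length v = n" using u v unfolding words_def by auto
  have su: "set u \<subseteq> A" and sv: "set v \<subseteq> A" using u v unfolding words_def by auto
  have "mu e W v v - mu e W u v = (\<Sum>i<n. Dv e W (u!i) (v!i))"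
    unfolding mu_def Dv_def lu lv by (simp add: sum_subtractf algebra_simps)
  moreover have "d^2 / 2 * real (hdist u v) = (\<Sum>i<n. if u!i = v!i then 0 else d^2/2)"
    unfolding hdist_def lu by (simp add: sum_distrib_left of_nat_sum if_distrib cong: if_cong)
  moreover have "(\<Sum>i<n. if u!i = v!i then 0 else d^2/2) \<le> (\<Sum>i<n. Dv e W (u!i) (v!i))"
  proof (rule sum_mono)
    fix i assume "i \<in> {..<n}"
    then have i: "i < n" by simp
    have ua: "u!i \<in> A" using su i lu nth_mem by blast
    have va: "v!i \<in> A" using sv i lv nth_mem by blast
    show "(if u!i = v!i then 0 else d^2/2) \<le> Dv e W (u!i) (v!i)"
    proof (cases "u!i = v!i")
      case True then show ?thesis by (simp add: Dv_self)
    next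
      case False then show ?thesis using Dv_sep[OF ch A ua va False d e] by simp
    qed
  qed
  ultimately show ?thesis by simp
qed

lemma cheb_gs:
  fixes W :: "'a \<Rightarrow> 'b::finite \<Rightarrow> real"
  assumes ch: "channel M W" and u: "set u \<subseteq> space M" and v: "set v \<subseteq> space M"
    and l: "length u = n" "length v = n"
    and e: "0 < e" "e \<le> 1"
    and S: "S \<subseteq> {ys. length ys = n}" and t: "0 < t"
    and far: "\<forall>ys\<in>S. t \<le> \<bar>gs e W u ys - mu e W u v\<bar>"
  shows "Wset W v S \<le> real n * (ln e)^2 / t^2"
proof -
  have pv: "\<forall>x\<in>set v. pd W x" using v channel_pd[OF ch] by auto
  have pu: "pd W (u!i)" if "i < n" for i
  proof -
    have "u!i \<in> set u" using that l by simp
    then show ?thesis using u channel_pd[OF ch] by auto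
  qed
  have "Wset W v S \<le> (\<Sum>ys\<in>{ys. length ys = length v}. Wseq W v ys * (gs e W u ys - mu e W u v)^2) / t^2"
    by (rule cheb[OF pv _ t]) (use S far l in auto)
  also have "(\<Sum>ys\<in>{ys. length ys = length v}. Wseq W v ys * (gs e W u ys - mu e W u v)^2)
      \<le> real (length v) * (- ln e)^2"
  proof -
    have h: "- (- ln e) \<le> lp e W (u!i) y \<and> lp e W (u!i) y \<le> 0" if "i < length v" for i y
      using lp_bounds[OF pu e, of i y] that l by simp
    have "gs e W u ys - mu e W u v = (\<Sum>i<length v. lp e W (u!i) (ys!i)) - (\<Sum>i<length v. \<Sum>y\<in>UNIV. W (v!i) y * lp e W (u!i) y)" for ys
      unfolding gs_def mu_def using l by simp
    then show ?thesis
      using var_bound[OF pv, of "- ln e" "\<lambda>i y. lp e W (u!i) y"] h by simp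
  qed
  then have "(\<Sum>ys\<in>{ys. length ys = length v}. Wseq W v ys * (gs e W u ys - mu e W u v)^2) / t^2
      \<le> real (length v) * (- ln e)^2 / t^2" using t by (intro divide_right_mono) auto
  finally show ?thesis using l by simp
qed

lemma mean_self:
  fixes W :: "'a \<Rightarrow> 'b::finite \<Rightarrow> real"
  assumes ch: "channel M W" and u: "set u \<subseteq> space M"
  shows "(\<Sum>ys\<in>{ys. length ys = length u}. Wseq W u ys * gs e W u ys) = mu e W u u"
proof -
  have pu: "\<forall>x\<in>set u. pd W x" using u channel_pd[OF ch] by auto
  show ?thesis unfolding gs_def mu_def by (rule Wseq_mean[OF pu])
qed



lemma mu_bounds:
  fixes W :: "'a \<Rightarrow> 'b::finite \<Rightarrow> real"
  assumes ch: "channel M W" and u: "set u \<subseteq> space M" and v: "set v \<subseteq> space M"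
    and l: "length u = n" "length v = n" and e: "0 < e" "e \<le> 1"
  shows "real n * ln e \<le> mu e W u v \<and> mu e W u v \<le> 0"
proof -
  have b: "ln e \<le> (\<Sum>y\<in>UNIV. W (v!i) y * lp e W (u!i) y) \<and> (\<Sum>y\<in>UNIV. W (v!i) y * lp e W (u!i) y) \<le> 0"
    if i: "i < n" for i
  proof -
    have "u!i \<in> set u" "v!i \<in> set v" using i l by auto
    then have pu: "pd W (u!i)" and pv: "pd W (v!i)" using u v channel_pd[OF ch] by auto
    have lb: "ln e \<le> lp e W (u!i) y \<and> lp e W (u!i) y \<le> 0" for y by (rule lp_bounds[OF pu e])
    have w0: "0 \<le> W (v!i) y" for y using pv unfolding pd_def by auto
    have "(\<Sum>y\<in>UNIV. W (v!i) y * ln e) \<le> (\<Sum>y\<in>UNIV. W (v!i) y * lp e W (u!i) y)"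
      using lb w0 by (intro sum_mono mult_left_mono) auto
    moreover have "(\<Sum>y\<in>UNIV. W (v!i) y * ln e) = ln e"
    proof -
      have "(\<Sum>y\<in>UNIV. W (v!i) y * ln e) = (\<Sum>y\<in>UNIV. W (v!i) y) * ln e" by (rule sum_distrib_right[symmetric])
      then show ?thesis using pv unfolding pd_def by simp
    qed
    moreover have "(\<Sum>y\<in>UNIV. W (v!i) y * lp e W (u!i) y) \<le> (\<Sum>y\<in>UNIV. W (v!i) y * 0)"
      using lb w0 by (intro sum_mono mult_left_mono) auto
    ultimately show ?thesis by simp
  qed
  have "(\<Sum>i<n. ln e) \<le> mu e W u v" unfolding mu_def l(1) using b by (intro sum_mono) auto
  moreover have "mu e W u v \<le> (\<Sum>i<n. (0::real))" unfolding mu_def l(1) using b by (intro sum_mono) auto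
  ultimately show ?thesis by simp
qed

lemma floor_eq_close:
  fixes a b :: real
  assumes "\<lfloor>a\<rfloor> = \<lfloor>b\<rfloor>"
  shows "\<bar>a - b\<bar> < 1"
  using assms floor_correct[of a] floor_correct[of b] by linarith

lemma nat_floor_eq:
  fixes x y :: real
  assumes "0 \<le> x" "0 \<le> y" "nat \<lfloor>x\<rfloor> = nat \<lfloor>y\<rfloor>"
  shows "\<lfloor>x\<rfloor> = \<lfloor>y\<rfloor>"
proof -
  have "0 \<le> \<lfloor>x\<rfloor>" "0 \<le> \<lfloor>y\<rfloor>" using assms(1,2) by auto
  then show ?thesis using eq_nat_nat_iff[of "\<lfloor>x\<rfloor>" "\<lfloor>y\<rfloor>"] assms(3) by simp
qed

lemma code_construct:
  fixes W :: "'a \<Rightarrow> 'b::finite \<Rightarrow> real"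
  assumes ch: "channel M W" and A: "sepset M W d A" and Ane: "A \<noteq> {}"
    and d: "0 < d" "d \<le> 1" and e: "e = (d^2 / (4 * real CARD('b)))^2" and k: "1 \<le> k"
    and cb1: "64 * real n * (ln e)^2 / (real k^2 * d^4) \<le> l1"
    and cb2: "64 * real n * (ln e)^2 / (real k^2 * d^4) \<le> l2"
  shows "\<exists>N u E. DI_code M W n N l1 l2 u E \<and>
     real (card A)^n \<le> real N * (8 * real n * (- ln e) / (real k * d^2) + 1) * 2^n * real (card A)^k"
proof -
  have As: "A \<subseteq> space M" "finite A" using A unfolding sepset_def by auto
  have Y: "1 \<le> real CARD('b)" by simp
  have e0: "0 < e" unfolding e using d Y by simp
  have e1: "e \<le> 1"
  proof -
    have "d^2 \<le> 1" using d by (simp add: power_le_one)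
    then have "d^2 \<le> 4 * real CARD('b)" using Y by linarith
    then have "d^2 / (4 * real CARD('b)) \<le> 1" using Y by (simp add: divide_le_eq)
    then show ?thesis unfolding e using d by (simp add: power_le_one)
  qed
  define Lc where "Lc = - ln e"
  have Lc0: "0 \<le> Lc" unfolding Lc_def using e0 e1 by simp
  obtain C0 where C0: "C0 \<subseteq> words A n" and C0sep: "\<forall>u\<in>C0. \<forall>v\<in>C0. u \<noteq> v \<longrightarrow> k \<le> hdist u v"
    and C0card: "card A ^ n \<le> card C0 * (2^n * card A ^ k)"
    using GV[OF As(2) Ane k, of n] by blast
  have fC0: "finite C0" using C0 finite_words[OF As(2)] finite_subset by blast
  have wd: "length u = n \<and> set u \<subseteq> space M \<and> set u \<subseteq> A" if "u \<in> C0" for u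
  proof -
    have "u \<in> words A n" using C0 that by blast
    then have "length u = n" "set u \<subseteq> A" unfolding words_def by auto
    then show ?thesis using As(1) by auto
  qed
  define w where "w = real k * d^2 / 8"
  have w0: "0 < w" unfolding w_def using k d by simp
  define bin where "bin u = nat \<lfloor>(- mu e W u u) / w\<rfloor>" for u
  define Bn where "Bn = nat \<lfloor>real n * Lc / w\<rfloor>"
  have mub: "real n * ln e \<le> mu e W u u \<and> mu e W u u \<le> 0" if "u \<in> C0" for u
    using mu_bounds[OF ch _ _ _ _ e0 e1, of u u n] wd[OF that] by auto
  have binT: "bin ` C0 \<subseteq> {0..Bn}"
  proof
    fix z assume "z \<in> bin ` C0"
    then obtain u where u: "u \<in> C0" "z = bin u" by auto
    have "- mu e W u u \<le> real n * Lc" using mub[OF u(1)] unfolding Lc_def by simp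
    then have "(- mu e W u u) / w \<le> real n * Lc / w" using w0 by (intro divide_right_mono) auto
    then have "\<lfloor>(- mu e W u u) / w\<rfloor> \<le> \<lfloor>real n * Lc / w\<rfloor>" by (rule floor_mono)
    then show "z \<in> {0..Bn}" unfolding u(2) bin_def Bn_def by simp
  qed
  obtain b where b: "b \<in> {0..Bn}" and bc: "card C0 \<le> card {0..Bn} * card {u\<in>C0. bin u = b}"
    using pigeonhole_fib[OF fC0 _ _ binT] by auto
  define C1 where "C1 = {u\<in>C0. bin u = b}"
  have fC1: "finite C1" unfolding C1_def using fC0 by simp
  obtain cl where cl: "set cl = C1" "distinct cl" using finite_distinct_list[OF fC1] by blast
  define N where "N = length cl"
  have NC1: "card C1 = N" unfolding N_def using distinct_card[OF cl(2)] cl(1) by simp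
  define u where "u j = cl ! j" for j
  have uC1: "u j \<in> C1" if "j < N" for j unfolding u_def using cl(1) that N_def nth_mem by blast
  have uC0: "u j \<in> C0" if "j < N" for j using uC1[OF that] unfolding C1_def by simp
  have uinj: "u j \<noteq> u j'" if "j < N" "j' < N" "j \<noteq> j'" for j j'
    unfolding u_def using nth_eq_iff_index_eq[OF cl(2), of j j'] that N_def by simp
  have close: "\<bar>mu e W (u j) (u j) - mu e W (u j') (u j')\<bar> < w" if "j < N" "j' < N" for j j'
  proof -
    have bb: "bin (u j) = b" "bin (u j') = b" using uC1 that unfolding C1_def by auto
    have nn: "0 \<le> (- mu e W (u j) (u j)) / w" "0 \<le> (- mu e W (u j') (u j')) / w"
      using mub[OF uC0[OF that(1)]] mub[OF uC0[OF that(2)]] w0 by (auto simp: divide_le_0_iff)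
    have "\<lfloor>(- mu e W (u j) (u j)) / w\<rfloor> = \<lfloor>(- mu e W (u j') (u j')) / w\<rfloor>"
      using nn bb unfolding bin_def by (intro nat_floor_eq) auto
    then have "\<bar>(- mu e W (u j) (u j)) / w - (- mu e W (u j') (u j')) / w\<bar> < 1"
      by (rule floor_eq_close)
    then have "\<bar>(mu e W (u j') (u j') - mu e W (u j) (u j)) / w\<bar> < 1" by (simp add: diff_divide_distrib)
    then have "\<bar>mu e W (u j') (u j') - mu e W (u j) (u j)\<bar> / w < 1" using w0 by (simp add: abs_divide)
    then have "\<bar>mu e W (u j') (u j') - mu e W (u j) (u j)\<bar> < 1 * w" by (simp only: pos_divide_less_eq[OF w0])
    then show ?thesis by linarith
  qed
  define t where "t = real k * d^2 / 8"
  have t0: "0 < t" unfolding t_def using k d by simp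
  have tb: "real n * (ln e)^2 / t^2 = 64 * real n * (ln e)^2 / (real k^2 * d^4)"
  proof -
    have t2: "t^2 = real k^2 * d^4 / 64"
    proof -
      have "t^2 = (real k)^2 * (d^2)^2 / 8^2" unfolding t_def by (simp add: power_mult_distrib power_divide)
      also have "(d^2)^2 = d^4" by (simp add: power_mult[symmetric])
      finally show ?thesis by simp
    qed
    show ?thesis unfolding t2 by simp
  qed
  define E where "E j = {ys. length ys = n \<and> mu e W (u j) (u j) - 2 * t \<le> gs e W (u j) ys}" for j
  have code: "DI_code M W n N l1 l2 u E"
    unfolding DI_code_def
  proof (intro conjI allI impI)
    fix j assume j: "j < N"
    have uj: "length (u j) = n" "set (u j) \<subseteq> space M" using wd[OF uC0[OF j]] by auto
    show "length (u j) = n" "set (u j) \<subseteq> space M" by (fact uj(1), fact uj(2))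
    show "E j \<subseteq> {ys. length ys = n}" unfolding E_def by auto
    let ?L = "{ys::'b list. length ys = n}"
    have fL: "finite ?L" by (rule finite_len)
    have EL: "E j \<subseteq> ?L" unfolding E_def by auto
    have pu: "\<forall>x\<in>set (u j). pd W x" using uj(2) channel_pd[OF ch] by auto
    have tot: "Wset W (u j) ?L = 1" unfolding Wset_def using Wseq_total[OF pu] uj(1) by simp
    have split: "Wset W (u j) ?L = Wset W (u j) (?L - E j) + Wset W (u j) (E j)"
      unfolding Wset_def using sum.subset_diff[OF EL fL] by simp
    have far: "\<forall>ys\<in>?L - E j. t \<le> \<bar>gs e W (u j) ys - mu e W (u j) (u j)\<bar>"
      unfolding E_def using t0 by auto
    have "Wset W (u j) (?L - E j) \<le> real n * (ln e)^2 / t^2"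
      by (rule cheb_gs[OF ch uj(2) uj(2) uj(1) uj(1) e0 e1 _ t0 far]) auto
    then have "Wset W (u j) (?L - E j) \<le> l1" using tb cb1 by simp
    then show "1 - l1 \<le> Wset W (u j) (E j)" using tot split by simp
  next
    fix j' j assume j': "j' < N" and j: "j < N" and ne0: "j' \<noteq> j"
    have ne: "j \<noteq> j'" using ne0 by simp
    have uj: "length (u j) = n" "set (u j) \<subseteq> space M" using wd[OF uC0[OF j]] by auto
    have uj': "length (u j') = n" "set (u j') \<subseteq> space M" using wd[OF uC0[OF j']] by auto
    have wj: "u j \<in> words A n" "u j' \<in> words A n" using uC0 j j' C0 by auto
    have hd: "k \<le> hdist (u j) (u j')" by (rule C0sep[rule_format, OF uC0[OF j] uC0[OF j'] uinj[OF j j' ne]])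
    have gap: "d^2 / 2 * real (hdist (u j) (u j')) \<le> mu e W (u j') (u j') - mu e W (u j) (u j')"
      by (rule mean_gap[OF ch A wj(1) wj(2) d(1) e])
    have "d^2 / 2 * real k \<le> d^2 / 2 * real (hdist (u j) (u j'))"
      using hd d by (intro mult_left_mono) auto
    then have gap2: "4 * t \<le> mu e W (u j') (u j') - mu e W (u j) (u j')"
      using gap unfolding t_def by (simp add: field_simps)
    have cl2: "\<bar>mu e W (u j) (u j) - mu e W (u j') (u j')\<bar> < t" using close[OF j j'] unfolding t_def w_def .
    have far: "\<forall>ys\<in>E j. t \<le> \<bar>gs e W (u j) ys - mu e W (u j) (u j')\<bar>"
    proof
      fix ys assume "ys \<in> E j"
      then have "mu e W (u j) (u j) - 2 * t \<le> gs e W (u j) ys" unfolding E_def by simp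
      then show "t \<le> \<bar>gs e W (u j) ys - mu e W (u j) (u j')\<bar>" using gap2 cl2 by linarith
    qed
    have "Wset W (u j') (E j) \<le> real n * (ln e)^2 / t^2"
      by (rule cheb_gs[OF ch uj(2) uj'(2) uj(1) uj'(1) e0 e1 _ t0 far]) (auto simp: E_def)
    then show "Wset W (u j') (E j) \<le> l2" using tb cb2 by simp
  qed
  have "real (card A)^n = real (card A ^ n)" by simp
  also have "\<dots> \<le> real (card C0 * (2^n * card A ^ k))" using C0card by (simp only: of_nat_le_iff)
  also have "\<dots> = real (card C0) * 2^n * real (card A)^k" by simp
  also have "\<dots> \<le> real (card {0..Bn} * card C1) * 2^n * real (card A)^k"
  proof -
    have "real (card C0) \<le> real (card {0..Bn} * card C1)" using bc unfolding C1_def by (simp only: of_nat_le_iff)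
    then show ?thesis by (intro mult_right_mono) auto
  qed
  also have "\<dots> = real N * real (Bn + 1) * 2^n * real (card A)^k" using NC1 by (simp add: algebra_simps)
  also have "\<dots> \<le> real N * (8 * real n * (- ln e) / (real k * d^2) + 1) * 2^n * real (card A)^k"
  proof -
    have "real Bn \<le> real n * Lc / w"
      unfolding Bn_def using Lc0 w0 by (simp add: of_nat_nat)
    also have "\<dots> = 8 * real n * (- ln e) / (real k * d^2)" unfolding Lc_def w_def by simp
    finally have "real (Bn + 1) \<le> 8 * real n * (- ln e) / (real k * d^2) + 1" by simp
    then show ?thesis by (intro mult_right_mono mult_left_mono) auto
  qed
  finally show ?thesis using code by blast
qed



lemma ln2_half: "1/2 \<le> ln (2::real)"
proof -
  have "exp (1/2::real) * exp (1/2) = exp 1" by (simp flip: exp_add)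
  also have "\<dots> \<le> 3" by (rule exp_le)
  finally have "exp (1/2::real) * exp (1/2) \<le> 3" .
  then have "(exp (1/2::real))^2 \<le> 2^2" by (simp add: power2_eq_square)
  then have "exp (1/2::real) \<le> 2" by (rule power2_le_imp_le) simp
  then have "ln (exp (1/2::real)) \<le> ln 2" by (subst ln_le_cancel_iff) auto
  then show ?thesis by simp
qed

lemma ln_le_sqrt: assumes "0 < (z::real)" shows "ln z \<le> 2 * (sqrt z - 1)"
proof -
  have s: "0 < sqrt z" using assms by simp
  have "ln z = 2 * ln (sqrt z)" using assms by (simp add: ln_sqrt)
  also have "\<dots> \<le> 2 * (sqrt z - 1)" using ln_le_minus_one[OF s] by simp
  finally show ?thesis .
qed

lemma log2_le_4sqrt: assumes "0 < (z::real)" shows "log 2 z \<le> 4 * sqrt z"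
proof (cases "ln z \<le> 0")
  case True
  then have "log 2 z \<le> 0" by (simp add: log_def divide_nonpos_pos)
  moreover have "0 \<le> sqrt z" using assms by simp
  ultimately show ?thesis by linarith
next
  case False
  have l2: "1/2 \<le> ln (2::real)" by (rule ln2_half)
  have "log 2 z = ln z / ln 2" by (simp add: log_def)
  also have "\<dots> \<le> ln z / (1/2)" using False l2 by (intro divide_left_mono) auto
  also have "\<dots> = 2 * ln z" by simp
  also have "\<dots> \<le> 4 * (sqrt z - 1)" using ln_le_sqrt[OF assms] by simp
  finally show ?thesis by simp
qed

lemma log2_le_self: assumes "0 < (z::real)" shows "log 2 z \<le> z"
proof (cases "ln z \<le> 0")
  case True
  then have "log 2 z \<le> 0" by (simp add: log_def divide_nonpos_pos)
  then show ?thesis using assms by linarith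
next
  case False
  have l2: "1/2 \<le> ln (2::real)" by (rule ln2_half)
  have "log 2 z = ln z / ln 2" by (simp add: log_def)
  also have "\<dots> \<le> ln z / (1/2)" using False l2 by (intro divide_left_mono) auto
  also have "\<dots> = 2 * ln z" by simp
  also have "\<dots> \<le> 4 * (sqrt z - 1)" using ln_le_sqrt[OF assms] by simp
  also have "\<dots> \<le> z"
  proof -
    have "0 \<le> (sqrt z - 2)^2" by simp
    also have "(sqrt z - 2)^2 = z - 4 * sqrt z + 4" using assms by (simp add: power2_diff)
    finally show ?thesis by simp
  qed
  finally show ?thesis .
qed



lemma rate_of_code:
  assumes code: "DI_code M W n N l1 l2 u E" and n: "2 \<le> n" and N: "1 \<le> N"
    and r: "r * (real n * log 2 (real n)) \<le> log 2 (real N)"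
  shows "ereal r \<le> DI_rate M W n l1 l2"
proof -
  have ge: "enat N \<le> N_DI M W n l1 l2" by (rule N_DI_ge[OF code])
  have pos: "0 < real n * log 2 (real n)" using n by simp
  show ?thesis
  proof (cases "N_DI M W n l1 l2")
    case (enat N')
    then have "N \<le> N'" using ge by simp
    then have "log 2 (real N) \<le> log 2 (real N')" using N by simp
    then have "r * (real n * log 2 (real n)) \<le> log 2 (real N')" using r by simp
    then have "r \<le> log 2 (real N') / (real n * log 2 (real n))" using pos by (simp add: pos_le_divide_eq)
    then show ?thesis unfolding DI_rate_def using enat by simp
  next
    case infinity
    then show ?thesis unfolding DI_rate_def by simp
  qed
qed

lemma final_arith:
  fixes q k n :: nat and m N bins r d' u Z :: real
  assumes q: "2 \<le> q" and k: "1 \<le> k" and n: "n = q * k" and m: "1 \<le> m" and N: "0 < N"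
    and bins: "1 \<le> bins"
    and main: "m ^ n \<le> N * bins * 2 ^ n * m ^ k"
    and hb: "log 2 bins \<le> real k" and hm: "d' * u \<le> log 2 m" and hn: "log 2 (real n) \<le> Z"
    and key: "real q + 1 + r * real q * Z \<le> (real q - 1) * d' * u" and r: "0 \<le> r"
  shows "r * (real n * log 2 (real n)) \<le> log 2 N"
proof -
  have m0: "0 < m" using m by simp
  have "log 2 (m ^ n) \<le> log 2 (N * bins * 2 ^ n * m ^ k)"
    using main m0 N bins by (subst log_le_cancel_iff) auto
  moreover have "log 2 (m ^ n) = real n * log 2 m" using m0 by (simp add: log_nat_power)
  moreover have "log 2 (N * bins * 2 ^ n * m ^ k) = log 2 N + log 2 bins + real n + real k * log 2 m"
    using m0 N bins by (simp add: log_mult log_nat_power)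
  ultimately have L: "real n * log 2 m \<le> log 2 N + log 2 bins + real n + real k * log 2 m" by simp
  have nq: "real n = real q * real k" using n by simp
  have "real k * ((real q - 1) * log 2 m - real q - 1) \<le> log 2 N"
    using L hb unfolding nq by (simp add: algebra_simps)
  moreover have "(real q - 1) * (d' * u) \<le> (real q - 1) * log 2 m"
    using hm q by (intro mult_left_mono) auto
  ultimately have "real k * ((real q - 1) * (d' * u) - real q - 1) \<le> log 2 N"
    using k by (smt (verit, best) mult_left_mono of_nat_0_le_iff)
  moreover have "real k * (r * real q * Z) \<le> real k * ((real q - 1) * (d' * u) - real q - 1)"
    using key k by (intro mult_left_mono) (auto simp: algebra_simps)
  moreover have "r * (real n * log 2 (real n)) \<le> real k * (r * real q * Z)"
  proof -
    have "r * real q * real k * log 2 (real n) \<le> r * real q * real k * Z"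
      using hn r by (intro mult_left_mono) auto
    then show ?thesis unfolding nq by (simp add: algebra_simps)
  qed
  ultimately show ?thesis by linarith
qed



lemma lower_core:
  fixes W :: "'a \<Rightarrow> 'b::finite \<Rightarrow> real"
  assumes ch: "channel M W" and ne: "space M \<noteq> {}" and l: "0 < l1" "0 < l2"
    and r: "0 < r" and dr: "4 * r < d'"
  shows "\<exists>d1>0. \<forall>d. 0 < d \<longrightarrow> d < d1 \<longrightarrow>
           d' * (- log 2 d) < log 2 (real (covering_number (sqrt_tilde M W) d)) \<longrightarrow>
           (\<exists>n\<ge>n0. ereal r \<le> DI_rate M W n l1 l2)"
proof -
  define q :: nat where "q = nat \<lceil>d' / (d' - 4 * r)\<rceil> + 2"
  have dd: "0 < d' - 4 * r" using dr by simp
  have q2: "2 \<le> q" unfolding q_def by simp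
  have qge: "d' / (d' - 4 * r) + 2 \<le> real q"
  proof -
    have a: "d' / (d' - 4 * r) \<le> real_of_int \<lceil>d' / (d' - 4 * r)\<rceil>" by (rule le_of_int_ceiling)
    have b: "real_of_int c \<le> real (nat c)" for c :: int by (cases "0 \<le> c") (auto simp: of_nat_nat)
    have "d' / (d' - 4 * r) \<le> real (nat \<lceil>d' / (d' - 4 * r)\<rceil>)" using a b[of "\<lceil>d' / (d' - 4 * r)\<rceil>"] by linarith
    then show ?thesis unfolding q_def by simp
  qed
  define eta where "eta = (real q - 1) * d' - 4 * r * real q"
  have eta: "0 < eta"
  proof -
    have "d' + 2 * (d' - 4 * r) \<le> real q * (d' - 4 * r)"
    proof -
      have "(d' / (d' - 4 * r) + 2) * (d' - 4 * r) \<le> real q * (d' - 4 * r)"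
        using qge dd by (intro mult_right_mono) auto
      moreover have "(d' / (d' - 4 * r) + 2) * (d' - 4 * r) = d' + 2 * (d' - 4 * r)"
        using dd by (simp add: distrib_right)
      ultimately show ?thesis by simp
    qed
    then show ?thesis unfolding eta_def using dd by (simp add: algebra_simps)
  qed
  define lam where "lam = min (min l1 l2) 1"
  have lam: "0 < lam" "lam \<le> 1" "lam \<le> l1" "lam \<le> l2" unfolding lam_def using l by auto
  define K0 where "K0 = 64 * real q / lam"
  have K0: "64 * real q \<le> K0" unfolding K0_def using lam q2 by (simp add: le_divide_eq)
  define Y where "Y = real CARD('b)"
  have Y: "1 \<le> Y" unfolding Y_def by simp
  define c1 where "c1 = 2 * ln (4 * Y) + 4"
  have lnY: "0 \<le> ln (4 * Y)" using Y by simp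
  have c1: "0 < c1" unfolding c1_def using lnY by simp
  define C3 where "C3 = real q + 1 + r * real q * \<bar>log 2 (2 * real q * K0)\<bar>"
  define C4 where "C4 = 8 * r * real q * sqrt c1"
  have C34: "0 \<le> C3" "0 \<le> C4" unfolding C3_def C4_def using r c1 by auto
  define U0 where "U0 = max 1 (((C3 + C4) / eta)^2)"
  define d1 where "d1 = min (min (1/2) (2 powr (- U0))) (1 / (real n0 + 1))"
  have d1: "0 < d1" unfolding d1_def by simp
  show ?thesis
  proof (intro exI[of _ d1] conjI allI impI d1)
    fix d :: real
    assume d0: "0 < d" and dlt: "d < d1"
      and phi: "d' * (- log 2 d) < log 2 (real (covering_number (sqrt_tilde M W) d))"
    define u where "u = - log 2 d"
    have dhalf: "d \<le> 1/2" using dlt unfolding d1_def by simp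
    have d1': "d \<le> 1" using dhalf by simp
    have uU: "U0 < u"
    proof -
      have "d < 2 powr (- U0)" using dlt unfolding d1_def by simp
      then have "log 2 d < log 2 (2 powr (- U0))" using d0 by (subst log_less_cancel_iff) auto
      then show ?thesis unfolding u_def by simp
    qed
    have u1: "1 \<le> u" using uU unfolding U0_def by simp
    have su: "(C3 + C4) / eta \<le> sqrt u"
    proof -
      have "((C3 + C4) / eta)^2 \<le> u" using uU unfolding U0_def by simp
      then have "sqrt (((C3 + C4) / eta)^2) \<le> sqrt u" by (rule real_sqrt_le_mono)
      then show ?thesis using C34 eta by simp
    qed
    have su1: "1 \<le> sqrt u" using u1 by simp
    have key0: "C3 + C4 * sqrt u \<le> eta * u"
    proof -
      have "C3 + C4 * sqrt u \<le> (C3 + C4) * sqrt u" using su1 C34 by (simp add: distrib_right mult_left_mono[of 1 "sqrt u" C3, simplified])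
      also have "\<dots> \<le> eta * sqrt u * sqrt u"
      proof -
        have "C3 + C4 \<le> eta * sqrt u" using su eta by (simp add: pos_divide_le_eq mult.commute)
        then show ?thesis using su1 by (intro mult_right_mono) auto
      qed
      also have "\<dots> = eta * u" using u1 by (simp add: mult.assoc)
      finally show ?thesis .
    qed
    define p where "p = 1 / d^2"
    have p1: "1 \<le> p" unfolding p_def using d0 d1' by (simp add: power_le_one)
    have logp: "log 2 p = 2 * u" unfolding p_def u_def using d0 by (simp add: log_divide log_nat_power)
    define e where "e = (d^2 / (4 * Y))^2"
    define Lc where "Lc = - ln e"
    have lnd: "ln d = - u * ln 2" unfolding u_def by (simp add: log_def)
    have Lceq: "Lc = 2 * ln (4 * Y) + 4 * u * ln 2"
    proof -
      have "ln e = 2 * ln (d^2 / (4 * Y))" unfolding e_def using d0 Y by (simp add: ln_realpow)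
      also have "ln (d^2 / (4 * Y)) = 2 * ln d - ln (4 * Y)" using d0 Y by (simp add: ln_div ln_realpow)
      finally show ?thesis unfolding Lc_def lnd by simp
    qed
    have l2b: "1/2 \<le> ln (2::real)" "ln (2::real) \<le> 1" using ln2_half ln_2_less_1 by auto
    have Lc2: "2 \<le> Lc"
    proof -
      have "1 * (1/2) \<le> u * ln 2" by (rule mult_mono) (use u1 l2b in auto)
      then have "2 \<le> 4 * u * ln 2" by simp
      then show ?thesis unfolding Lceq using lnY by simp
    qed
    have Lcu: "Lc \<le> c1 * u"
    proof -
      have "2 * ln (4 * Y) \<le> 2 * ln (4 * Y) * u" using lnY u1 by (simp add: mult_le_cancel_left1)
      moreover have "4 * u * ln 2 \<le> 4 * u" using l2b u1 by simp
      ultimately show ?thesis unfolding Lceq c1_def by (simp add: algebra_simps)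
    qed
    define kap where "kap = K0 * Lc^2 * p^2"
    have kap1: "64 * real q * Lc^2 * p^2 \<le> kap" unfolding kap_def using K0 by (simp add: mult_right_mono)
    have kge: "p \<le> kap"
    proof -
      have "p \<le> p^2" using p1 by (simp add: power2_eq_square)
      also have "\<dots> \<le> 64 * real q * Lc^2 * p^2"
      proof -
        have L1: "1 \<le> Lc^2" using Lc2 by (simp add: one_le_power)
        have "1 * 1 \<le> (64 * real q) * Lc^2" by (rule mult_mono) (use q2 L1 in auto)
        then have "1 \<le> 64 * real q * Lc^2" by simp
        then show ?thesis by (simp add: mult_le_cancel_right1)
      qed
      finally show ?thesis using kap1 by simp
    qed
    have kap_pos: "1 \<le> kap" using kge p1 by simp
    define k where "k = nat \<lceil>kap\<rceil>"
    have kk: "kap \<le> real k" "real k \<le> 2 * kap" unfolding k_def using kap_pos by (auto simp: of_nat_nat) linarith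
    have k1: "1 \<le> k" using kk kap_pos by simp
    define n where "n = q * k"
    have n2: "2 \<le> n" unfolding n_def using mult_le_mono[OF q2 k1] by simp
    have nn: "real n = real q * real k" unfolding n_def by simp
    have d4: "d^4 = 1 / p^2" unfolding p_def by (simp add: power_mult[symmetric] power_one_over)
    have cb: "64 * real n * (ln e)^2 / (real k^2 * d^4) \<le> lam"
    proof -
      have "(ln e)^2 = Lc^2" unfolding Lc_def by simp
      then have "64 * real n * (ln e)^2 / (real k^2 * d^4) = 64 * real q * Lc^2 * p^2 / real k"
        unfolding nn d4 using k1 by (simp add: power2_eq_square field_simps)
      also have "\<dots> \<le> lam"
      proof -
        have "64 * real q * Lc^2 * p^2 = lam * (K0 * Lc^2 * p^2)" unfolding K0_def using lam by simp
        also have "\<dots> \<le> lam * real k" using kk lam unfolding kap_def by (intro mult_left_mono) auto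
        finally show ?thesis using k1 by (simp add: divide_le_eq mult.commute)
      qed
      finally show ?thesis .
    qed
    obtain A where A: "sepset M W d A" and GA: "covering_number (sqrt_tilde M W) d \<le> card A"
      using packing[OF ch d0] by blast
    have G1: "1 \<le> covering_number (sqrt_tilde M W) d"
      using covering_pos[OF bounded_sqrt_tilde[OF ch] d0] ne by (simp add: sqrt_tilde_def)
    have Afin: "finite A" using A unfolding sepset_def by simp
    have Ane: "A \<noteq> {}" using G1 GA by auto
    have cb1: "64 * real n * (ln e)^2 / (real k^2 * d^4) \<le> l1" using cb lam(3) by linarith
    have cb2: "64 * real n * (ln e)^2 / (real k^2 * d^4) \<le> l2" using cb lam(4) by linarith
    have eY: "e = (d^2 / (4 * real CARD('b)))^2" using e_def Y_def by simp
    obtain N uu E where code: "DI_code M W n N l1 l2 uu E"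
      and main: "real (card A)^n \<le> real N * (8 * real n * (- ln e) / (real k * d^2) + 1) * 2^n * real (card A)^k"
      using code_construct[OF ch A Ane d0 d1' eY k1 cb1 cb2] by blast
    define bins where "bins = 8 * real n * (- ln e) / (real k * d^2) + 1"
    have binseq: "bins = 8 * real q * Lc * p + 1"
      unfolding bins_def Lc_def p_def nn using k1 by simp
    have bins1: "1 \<le> bins" unfolding binseq using Lc2 p1 by simp
    have hb: "log 2 bins \<le> real k"
    proof -
      have "log 2 bins \<le> bins" using bins1 by (intro log2_le_self) simp
      also have "bins \<le> 64 * real q * Lc^2 * p^2"
      proof -
        have a: "8 * real q * Lc * p \<le> 63 * real q * Lc * p" using q2 Lc2 p1 by simp
        have b0: "1 * 1 \<le> real q * Lc" by (rule mult_mono) (use q2 Lc2 in auto)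
        have b1: "1 * 1 \<le> (real q * Lc) * p" by (rule mult_mono) (use b0 p1 in auto)
        have b: "1 \<le> real q * Lc * p" using b1 by simp
        have c: "real q * Lc * p \<le> real q * Lc^2 * p^2"
        proof -
          have "Lc * p \<le> Lc^2 * p^2" using Lc2 p1 by (simp add: power2_eq_square mult_mono)
          then show ?thesis using q2 by (simp add: mult.assoc mult_left_mono)
        qed
        show ?thesis unfolding binseq using a b c by linarith
      qed
      also have "\<dots> \<le> real k" using kap1 kk by simp
      finally show ?thesis .
    qed
    define m where "m = real (card A)"
    have m1: "1 \<le> m" unfolding m_def using Ane Afin by (simp add: Suc_leI card_gt_0_iff)
    have hm: "d' * u \<le> log 2 m"
    proof -
      have "log 2 (real (covering_number (sqrt_tilde M W) d)) \<le> log 2 m"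
        unfolding m_def using GA G1 by simp
      then show ?thesis using phi unfolding u_def by simp
    qed
    define Z where "Z = log 2 (2 * real q * K0) + 2 * log 2 Lc + 4 * u"
    have hn: "log 2 (real n) \<le> Z"
    proof -
      have "real n \<le> real q * (2 * kap)" unfolding nn using kk by (simp add: mult_left_mono)
      also have "\<dots> = (2 * real q * K0) * Lc^2 * p^2" unfolding kap_def by simp
      finally have nle: "real n \<le> (2 * real q * K0) * Lc^2 * p^2" .
      have q2r: "2 \<le> real q" using q2 by simp
      have K0p: "0 < K0" using K0 q2r by linarith
      have pos: "0 < 2 * real q * K0" using q2r K0p by simp
      have "log 2 (real n) \<le> log 2 ((2 * real q * K0) * Lc^2 * p^2)"
        using nle n2 by (subst log_le_cancel_iff) (use pos Lc2 p1 in auto)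
      also have "\<dots> = log 2 (2 * real q * K0) + 2 * log 2 Lc + 2 * log 2 p"
      proof -
        have "q \<noteq> 0" "K0 \<noteq> 0" using q2 K0p by auto
        then show ?thesis using pos Lc2 p1 by (simp add: log_mult log_nat_power)
      qed
      finally show ?thesis unfolding Z_def logp by simp
    qed
    have key: "real q + 1 + r * real q * Z \<le> (real q - 1) * d' * u"
    proof -
      have lL: "log 2 Lc \<le> 4 * sqrt c1 * sqrt u"
      proof -
        have "log 2 Lc \<le> 4 * sqrt Lc" using Lc2 by (intro log2_le_4sqrt) simp
        also have "sqrt Lc \<le> sqrt (c1 * u)" using Lcu by simp
        finally show ?thesis by (simp add: real_sqrt_mult)
      qed
      have "Z \<le> \<bar>log 2 (2 * real q * K0)\<bar> + 8 * sqrt c1 * sqrt u + 4 * u"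
        unfolding Z_def using lL by simp
      then have "r * real q * Z \<le> r * real q * (\<bar>log 2 (2 * real q * K0)\<bar> + 8 * sqrt c1 * sqrt u + 4 * u)"
        using r by (intro mult_left_mono) auto
      also have "\<dots> = r * real q * \<bar>log 2 (2 * real q * K0)\<bar> + C4 * sqrt u + 4 * r * real q * u"
        unfolding C4_def by (simp add: algebra_simps)
      finally have "real q + 1 + r * real q * Z \<le> C3 + C4 * sqrt u + 4 * r * real q * u"
        unfolding C3_def by simp
      also have "\<dots> \<le> eta * u + 4 * r * real q * u" using key0 by simp
      also have "\<dots> = (real q - 1) * d' * u" unfolding eta_def by (simp add: algebra_simps)
      finally show ?thesis .
    qed
    have mainb: "m ^ n \<le> real N * bins * 2 ^ n * m ^ k" using main unfolding m_def bins_def .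
    have Npos: "0 < real N"
    proof (rule ccontr)
      assume "\<not> 0 < real N"
      then have "real N = 0" by simp
      then have "m ^ n \<le> 0" using mainb by simp
      moreover have "0 < m ^ n" using m1 by simp
      ultimately show False by simp
    qed
    have "r * (real n * log 2 (real n)) \<le> log 2 (real N)"
      by (rule final_arith[OF q2 k1 n_def m1 Npos bins1 mainb hb hm hn key]) (use r in simp)
    then have rate: "ereal r \<le> DI_rate M W n l1 l2"
      using rate_of_code[OF code n2] Npos by simp
    have "n0 \<le> n"
    proof -
      have "real n0 + 1 < 1 / d"
      proof -
        have "d < 1 / (real n0 + 1)" using dlt unfolding d1_def by simp
        then show ?thesis using d0 by (simp add: field_simps)
      qed
      also have "1 / d \<le> p" unfolding p_def using d0 d1' by (simp add: divide_le_eq power2_eq_square mult_le_one)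
      also have "p \<le> real k" using kge kk by simp
      also have "real k \<le> real n"
      proof -
        have "1 * real k \<le> real q * real k" by (rule mult_right_mono) (use q2 in auto)
        then show ?thesis unfolding nn by simp
      qed
      finally show ?thesis by simp
    qed
    then show "\<exists>n\<ge>n0. ereal r \<le> DI_rate M W n l1 l2" using rate by blast
  qed
qed



lemma limsup_ge_of_frequent:
  fixes R :: "nat \<Rightarrow> ereal"
  assumes "\<And>n0. \<exists>n\<ge>n0. c \<le> R n"
  shows "c \<le> limsup R"
proof (rule ccontr)
  assume "\<not> c \<le> limsup R"
  then have "limsup R < c" by simp
  then have "eventually (\<lambda>n. R n < c) sequentially" by (rule Limsup_lessD)
  then obtain N0 where "\<forall>n\<ge>N0. R n < c" unfolding eventually_sequentially by blast
  moreover obtain n where n: "n \<ge> N0" "c \<le> R n" using assms by blast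
  ultimately have "R n < c" by blast
  then show False using n(2) by simp
qed

lemma rate_nonneg:
  fixes W :: "'a \<Rightarrow> 'b::finite \<Rightarrow> real"
  assumes ch: "channel M W" and ne: "space M \<noteq> {}" and l: "0 \<le> l1" and n: "2 \<le> n"
  shows "0 \<le> DI_rate M W n l1 l2"
proof -
  obtain x where x: "x \<in> space M" using ne by auto
  have "ereal 0 \<le> DI_rate M W n l1 l2"
    by (rule rate_of_code[OF code_one[OF ch x l] n]) simp_all
  then show ?thesis by (simp add: zero_ereal_def)
qed

lemma lower_bound_l:
  fixes W :: "'a \<Rightarrow> 'b::finite \<Rightarrow> real"
  assumes ch: "channel M W" and ne: "space M \<noteq> {}" and l: "0 < l1" "0 < l2"
  shows "ereal (1/4) * upper_minkowski_dim (sqrt_tilde M W) \<le> limsup (\<lambda>n. DI_rate M W n l1 l2)"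
proof (rule ccontr)
  let ?D = "upper_minkowski_dim (sqrt_tilde M W)"
  let ?R = "\<lambda>n. DI_rate M W n l1 l2"
  let ?phi = "\<lambda>d. ereal (log 2 (real (covering_number (sqrt_tilde M W) d)) / (- log 2 d))"
  assume "\<not> ereal (1/4) * ?D \<le> limsup ?R"
  then have "limsup ?R < ereal (1/4) * ?D" by simp
  then obtain r where r1: "limsup ?R < ereal r" and r2: "ereal r < ereal (1/4) * ?D"
    using ereal_dense2 by blast
  have L0: "0 \<le> limsup ?R"
  proof (rule le_Limsup)
    show "sequentially \<noteq> bot" by simp
    show "\<forall>\<^sub>F n in sequentially. 0 \<le> ?R n"
      using eventually_ge_at_top[of "2::nat"] by eventually_elim (use rate_nonneg[OF ch ne] l in auto)
  qed
  have "0 < ereal r" using L0 r1 by (rule le_less_trans)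
  then have rpos: "0 < r" by simp
  obtain d' where dr: "4 * r < d'" and dD: "ereal d' < ?D"
  proof (cases ?D)
    case (real D0)
    then have "r < D0 / 4" using r2 by simp
    then show ?thesis using that[of "(4 * r + D0) / 2"] real by simp
  next
    case PInf
    then show ?thesis using that[of "4 * r + 1"] by simp
  next
    case MInf
    then show ?thesis using r2 by simp
  qed
  have freq: "\<exists>\<^sub>F d in at_right 0. ereal d' < ?phi d"
  proof (rule ccontr)
    assume "\<not> ?thesis"
    then have "eventually (\<lambda>d. ?phi d \<le> ereal d') (at_right 0)"
      unfolding frequently_def by (simp add: not_less)
    then have "?D \<le> ereal d'" unfolding upper_minkowski_dim_def by (rule Limsup_bounded)
    then show False using dD by simp
  qed
  have "ereal r \<le> limsup ?R"
  proof (rule limsup_ge_of_frequent)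
    fix n0
    have ex: "\<exists>d1>0. \<forall>d. 0 < d \<longrightarrow> d < d1 \<longrightarrow>
           d' * (- log 2 d) < log 2 (real (covering_number (sqrt_tilde M W) d)) \<longrightarrow>
           (\<exists>n\<ge>n0. ereal r \<le> ?R n)"
      by (rule lower_core[OF ch ne l rpos dr])
    from ex obtain d1 where dd1: "0 < d1 \<and> (\<forall>d. 0 < d \<longrightarrow> d < d1 \<longrightarrow>
           d' * (- log 2 d) < log 2 (real (covering_number (sqrt_tilde M W) d)) \<longrightarrow>
           (\<exists>n\<ge>n0. ereal r \<le> ?R n))" by (rule exE)
    have d1: "0 < d1" using dd1 by (rule conjunct1)
    have d1P: "\<forall>d. 0 < d \<longrightarrow> d < d1 \<longrightarrow>
           d' * (- log 2 d) < log 2 (real (covering_number (sqrt_tilde M W) d)) \<longrightarrow>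
           (\<exists>n\<ge>n0. ereal r \<le> ?R n)" using dd1 by (rule conjunct2)
    have ev: "eventually (\<lambda>d. 0 < d \<and> d < min d1 1) (at_right (0::real))"
      unfolding eventually_at_right_field using d1 by (intro exI[of _ "min d1 1"]) auto
    have "\<exists>\<^sub>F d in at_right 0. (0 < d \<and> d < min d1 1) \<and> ereal d' < ?phi d"
      by (rule frequently_eventually_conj[OF freq ev])
    from frequently_ex[OF this] obtain d where dd: "(0 < d \<and> d < min d1 1) \<and> ereal d' < ?phi d" by (rule exE)
    have d: "0 < d" "d < min d1 1" using dd by auto
    have ph: "ereal d' < ?phi d" using dd by (rule conjunct2)
    have pos: "0 < - log 2 d" using d by simp
    have "d' < log 2 (real (covering_number (sqrt_tilde M W) d)) / (- log 2 d)" using ph by simp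
    moreover have gen: "\<And>a b e::real. 0 < b \<Longrightarrow> e < a / b \<Longrightarrow> e * b < a"
      by (simp add: pos_less_divide_eq)
    ultimately have "d' * (- log 2 d) < log 2 (real (covering_number (sqrt_tilde M W) d))"
      using pos by blast
    then show "\<exists>n\<ge>n0. ereal r \<le> ?R n" using d1P d(1) d(2) by simp
  qed
  then show False using r1 by simp
qed

lemma lower_bound:
  fixes W :: "'a \<Rightarrow> 'b::finite \<Rightarrow> real"
  assumes ch: "channel M W" and ne: "space M \<noteq> {}"
  shows "ereal (1/4) * upper_minkowski_dim (sqrt_tilde M W) \<le> C_opt_DI M W"
  unfolding C_opt_DI_def
  by (intro INF_greatest) (use lower_bound_l[OF ch ne] in auto)

lemma middle:
  assumes "0 < l1" "0 < l2"
  shows "C_opt_DI M W \<le> limsup (\<lambda>n. DI_rate M W n l1 l2)"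
proof -
  have "C_opt_DI M W \<le> (INF l2\<in>{0<..}. limsup (\<lambda>n. DI_rate M W n l1 l2))"
    unfolding C_opt_DI_def using assms(1) by (intro INF_lower) simp
  also have "\<dots> \<le> limsup (\<lambda>n. DI_rate M W n l1 l2)"
    using assms(2) by (intro INF_lower) simp
  finally show ?thesis .
qed

theorem theorem7:
  fixes M :: "'a measure" and W :: "'a \<Rightarrow> 'b::finite \<Rightarrow> real" and l1 l2 :: real
  assumes "channel M W"
    and "space M \<noteq> {}"
    and "0 < l1" and "0 < l2" and "l1 + l2 < 1"
  shows "ereal (1/4) * upper_minkowski_dim (sqrt_tilde M W) \<le> C_opt_DI M W
    \<and> C_opt_DI M W \<le> limsup (\<lambda>n. DI_rate M W n l1 l2)
    \<and> limsup (\<lambda>n. DI_rate M W n l1 l2) \<le> ereal (1/2) * upper_minkowski_dim (sqrt_tilde M W)"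
  by (intro conjI lower_bound[OF assms(1,2)] middle[OF assms(3,4)] upper_bound[OF assms(1-5)])

end
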